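(* Let $(A,\mathfrak m)$ and $(B,\mathfrak n)$ be Noetherian local rings and let $f:A\to B$ be a local ring homomorphism satisfying going-down. Then: (a) $\operatorname{cdim}(B)\le\operatorname{cdim}(A)+\operatorname{cdim}(B/\mathfrak mB)$; (b) if $B/\mathfrak mB$ is regular, then $\operatorname{cdim}(B)\le\operatorname{cdim}(A)$.
   Context: For a Noetherian local ring $(R,\mathfrak r)$, $\operatorname{edim}(R)=\dim_{R/\mathfrak r}(\mathfrak r/\mathfrak r^2)$ and $\operatorname{cdim}(R):=\operatorname{edim}(R)-\dim(R)$, with $\dim$ the Krull dimension. $\mathfrak mB=f(\mathfrak m)B$. A ring homomorphism $h:R\to S$ satisfies going-down if for primes $p\subseteq q$ of $R$ and any prime $Q$ of $S$ lying over $q$ there is a prime $P\subseteq Q$ of $S$ lying over $p$. *)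

theory Defs
  imports "HOL-Algebra.Ring_Divisibility" "HOL-Algebra.QuotRing" "HOL-Algebra.Ideal_Product"
    "HOL-Library.Extended_Nat"
begin

definition local_ring :: "('a, 'b) ring_scheme \<Rightarrow> bool" where
  "local_ring R \<longleftrightarrow> cring R \<and> (\<exists>!m. maximalideal m R)"

definition noeth_local_ring :: "('a, 'b) ring_scheme \<Rightarrow> bool" where
  "noeth_local_ring R \<longleftrightarrow> local_ring R \<and> noetherian_ring R"

definition max_ideal :: "('a, 'b) ring_scheme \<Rightarrow> 'a set" where
  "max_ideal R = (THE m. maximalideal m R)"

definition krull_dim :: "('a, 'b) ring_scheme \<Rightarrow> enat" where
  "krull_dim R = Sup {enat n | n. \<exists>P. (\<forall>i\<le>n. primeideal (P i) R) \<and> (\<forall>i<n. P i \<subset> P (Suc i))}"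

(* Embedding dimension dim_{R/m}(m/m^2), written out as the minimal size of a
   (finite) subset S of m whose images span the R/m-vector space m/m^2,
   i.e. such that m is the ideal generated by S together with m^2. *)
definition edim :: "('a, 'b) ring_scheme \<Rightarrow> nat" where
  "edim R = (LEAST n. \<exists>S. finite S \<and> card S = n \<and> S \<subseteq> max_ideal R \<and>
      Idl\<^bsub>R\<^esub> (S \<union> ideal_prod R (max_ideal R) (max_ideal R)) = max_ideal R)"

(* codimension cdim(R) = edim(R) - dim(R) (dim is finite for Noetherian local rings) *)
definition cdim :: "('a, 'b) ring_scheme \<Rightarrow> int" where
  "cdim R = int (edim R) - int (the_enat (krull_dim R))"

definition regular_local_ring :: "('a, 'b) ring_scheme \<Rightarrow> bool" where
  "regular_local_ring R \<longleftrightarrow> noeth_local_ring R \<and> krull_dim R = enat (edim R)"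

definition local_hom :: "('a, 'c) ring_scheme \<Rightarrow> ('b, 'd) ring_scheme \<Rightarrow> ('a \<Rightarrow> 'b) \<Rightarrow> bool" where
  "local_hom A B f \<longleftrightarrow> f \<in> ring_hom A B \<and> f ` max_ideal A \<subseteq> max_ideal B"

definition going_down :: "('a, 'c) ring_scheme \<Rightarrow> ('b, 'd) ring_scheme \<Rightarrow> ('a \<Rightarrow> 'b) \<Rightarrow> bool" where
  "going_down A B f \<longleftrightarrow>
     (\<forall>p q Q. primeideal p A \<and> primeideal q A \<and> p \<subseteq> q \<and> primeideal Q B \<and>
        {a \<in> carrier A. f a \<in> Q} = q \<longrightarrow>
        (\<exists>P. primeideal P B \<and> P \<subseteq> Q \<and> {a \<in> carrier A. f a \<in> P} = p))"

definition ext_ideal :: "('a, 'c) ring_scheme \<Rightarrow> ('b, 'd) ring_scheme \<Rightarrow> ('a \<Rightarrow> 'b) \<Rightarrow> 'a set \<Rightarrow> 'b set" where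
  "ext_ideal A B f I = Idl\<^bsub>B\<^esub> (f ` I)"

end

theory Submission
  imports Defs
begin

no_notation Sum_Type.Plus (infixr \<open><+>\<close> 65)

lemma (in cring) ideal_simpleI:
  assumes "J \<subseteq> carrier R" "\<zero> \<in> J" "\<And>a b. a \<in> J \<Longrightarrow> b \<in> J \<Longrightarrow> a \<oplus> b \<in> J"
    "\<And>a x. a \<in> J \<Longrightarrow> x \<in> carrier R \<Longrightarrow> x \<otimes> a \<in> J"
  shows "ideal J R"
proof (rule idealI[OF ring_axioms])
  have neg: "\<ominus> a \<in> J" if "a \<in> J" for a
  proof -
    have "\<ominus> a = (\<ominus> \<one>) \<otimes> a" using that assms(1) by (simp add: l_minus subsetD)
    thus ?thesis using assms(4)[OF that] by simp
  qed
  show "subgroup J (add_monoid R)"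
    by (rule subgroup.intro) (use assms neg in \<open>auto simp: a_inv_def[symmetric]\<close>)
  show "x \<otimes> a \<in> J" if "a \<in> J" "x \<in> carrier R" for a x using assms(4) that .
  show "a \<otimes> x \<in> J" if "a \<in> J" "x \<in> carrier R" for a x
    using assms(4)[OF that] that assms(1) m_comm by (metis subsetD)
qed

definition sat :: "('a, 'b) ring_scheme \<Rightarrow> 'a set \<Rightarrow> 'a set \<Rightarrow> 'a set" where
  "sat R P J = {r \<in> carrier R. \<exists>s \<in> carrier R - P. s \<otimes>\<^bsub>R\<^esub> r \<in> J}"

context cring
begin

lemma satI: "s \<in> carrier R \<Longrightarrow> s \<notin> P \<Longrightarrow> r \<in> carrier R \<Longrightarrow> s \<otimes> r \<in> J \<Longrightarrow> r \<in> sat R P J"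
  unfolding sat_def by blast

lemma satE: assumes "r \<in> sat R P J"
  obtains s where "s \<in> carrier R" "s \<notin> P" "s \<otimes> r \<in> J" "r \<in> carrier R"
  using assms unfolding sat_def by blast

lemma prime_one_notin: "primeideal P R \<Longrightarrow> \<one> \<notin> P"
  using primeideal.I_notcarr ideal.one_imp_carrier primeideal.axioms(1) by fastforce

lemma prime_mult_notin: "primeideal P R \<Longrightarrow> s \<in> carrier R \<Longrightarrow> t \<in> carrier R \<Longrightarrow> s \<notin> P \<Longrightarrow> t \<notin> P \<Longrightarrow> s \<otimes> t \<notin> P"
  by (metis primeideal.I_prime)

lemma sat_ideal:
  assumes P: "primeideal P R" and J: "ideal J R"
  shows "ideal (sat R P J) R"
proof (rule ideal_simpleI)
  show "sat R P J \<subseteq> carrier R" unfolding sat_def by auto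
  show "\<zero> \<in> sat R P J"
    by (rule satI[of "\<one>"]) (simp_all add: prime_one_notin[OF P] additive_subgroup.zero_closed[OF ideal.axioms(1)[OF J]])
  show "a \<oplus> b \<in> sat R P J" if ha: "a \<in> sat R P J" and hb: "b \<in> sat R P J" for a b
  proof -
    obtain s where s: "s \<in> carrier R" "s \<notin> P" "s \<otimes> a \<in> J" and a: "a \<in> carrier R"
      using ha by (rule satE)
    obtain t where t: "t \<in> carrier R" "t \<notin> P" "t \<otimes> b \<in> J" and b: "b \<in> carrier R"
      using hb by (rule satE)
    have "(t \<otimes> s) \<otimes> (a \<oplus> b) = t \<otimes> (s \<otimes> a) \<oplus> s \<otimes> (t \<otimes> b)"
      using s t a b by algebra
    also have "\<dots> \<in> J" using s t a b J
      by (meson additive_subgroup.a_closed ideal.I_l_closed ideal.axioms(1))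
    finally show ?thesis using prime_mult_notin[OF P t(1) s(1) t(2) s(2)] s t a b
      by (intro satI[of "t \<otimes> s"]) simp_all
  qed
  show "x \<otimes> a \<in> sat R P J" if ha: "a \<in> sat R P J" and hx: "x \<in> carrier R" for a x
  proof -
    obtain s where s: "s \<in> carrier R" "s \<notin> P" "s \<otimes> a \<in> J" and a: "a \<in> carrier R"
      using ha by (rule satE)
    have "s \<otimes> (x \<otimes> a) = x \<otimes> (s \<otimes> a)" using s a hx by algebra
    also have "\<dots> \<in> J" using ideal.I_l_closed[OF J s(3) hx] .
    finally show ?thesis using s a hx by (intro satI[of s]) simp_all
  qed
qed

lemma sat_incl:
  assumes P: "primeideal P R" and "J \<subseteq> carrier R"
  shows "J \<subseteq> sat R P J"
  using assms prime_one_notin[OF P] by (auto intro!: satI[of "\<one>"])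

lemma sat_mono: "J \<subseteq> J' \<Longrightarrow> sat R P J \<subseteq> sat R P J'"
  unfolding sat_def by blast

lemma sat_anti: "Q \<subseteq> P \<Longrightarrow> sat R P J \<subseteq> sat R Q J"
  unfolding sat_def by blast

lemma sat_carrier: "sat R P J \<subseteq> carrier R"
  unfolding sat_def by blast

lemma sat_idem:
  assumes P: "primeideal P R" and J: "ideal J R"
  shows "sat R P (sat R P J) = sat R P J"
proof
  show "sat R P J \<subseteq> sat R P (sat R P J)"
    using sat_incl[OF P] sat_carrier by blast
  show "sat R P (sat R P J) \<subseteq> sat R P J"
  proof
    fix r assume "r \<in> sat R P (sat R P J)"
    then obtain s where s: "s \<in> carrier R" "s \<notin> P" "s \<otimes> r \<in> sat R P J" and r: "r \<in> carrier R"
      by (rule satE)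
    obtain t where t: "t \<in> carrier R" "t \<notin> P" "t \<otimes> (s \<otimes> r) \<in> J"
      using s(3) by (rule satE)
    have "(t \<otimes> s) \<otimes> r = t \<otimes> (s \<otimes> r)" using s t r by algebra
    thus "r \<in> sat R P J" using prime_mult_notin[OF P t(1) s(1) t(2) s(2)] s t r
      by (intro satI[of "t \<otimes> s"]) simp_all
  qed
qed

lemma sat_prime:
  assumes P: "primeideal P R" and Q: "primeideal Q R" and "Q \<subseteq> P"
  shows "sat R P Q = Q"
proof
  show "Q \<subseteq> sat R P Q" using sat_incl[OF P] Q
    by (simp add: ideal.axioms(1) additive_subgroup.a_subset primeideal.axioms(1))
  show "sat R P Q \<subseteq> Q" unfolding sat_def using primeideal.I_prime[OF Q] assms(3) by blast
qed

lemma sat_sub_prime: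
  assumes "J \<subseteq> P" "primeideal P R"
  shows "sat R P J \<subseteq> P"
  unfolding sat_def using primeideal.I_prime[OF assms(2)] assms(1) by blast

lemma sat_cancel:
  assumes P: "primeideal P R" and J: "ideal J R"
    and x: "x \<in> carrier R" "x \<notin> P" and a: "a \<in> carrier R" and xa: "x \<otimes> a \<in> sat R P J"
  shows "a \<in> sat R P J"
proof -
  have "a \<in> sat R P (sat R P J)" using x a xa by (rule satI[of x])
  thus ?thesis using sat_idem[OF P J] by simp
qed

end

locale ncr = noetherian_ring + cring

lemma (in noetherian_ring) max_principle:
  assumes "S \<noteq> {}" "\<And>I. I \<in> S \<Longrightarrow> ideal I R"
  shows "\<exists>M\<in>S. \<forall>X\<in>S. M \<subseteq> X \<longrightarrow> X = M"
proof (rule Zorn_Lemma2, intro ballI)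
  fix C assume C: "C \<in> chains S"
  show "\<exists>U\<in>S. \<forall>X\<in>C. X \<subseteq> U"
  proof (cases "C = {}")
    case True then show ?thesis using assms(1) by blast
  next
    case False
    have "subset.chain {I. ideal I R} C" using C assms(2) unfolding chains_alt_def subset_chain_def
      by auto
    then have "\<Union>C \<in> C" using ideal_chain_is_trivial False by blast
    then show ?thesis using C unfolding chains_def by auto
  qed
qed

definition padd :: "('a, 'b) ring_scheme \<Rightarrow> 'a set \<Rightarrow> 'a \<Rightarrow> 'a set" where
  "padd R M a = {m \<oplus>\<^bsub>R\<^esub> r \<otimes>\<^bsub>R\<^esub> a | m r. m \<in> M \<and> r \<in> carrier R}"

context cring
begin

lemma padd_ideal:
  assumes M: "ideal M R" and a: "a \<in> carrier R"
  shows "ideal (padd R M a) R"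
proof (rule ideal_simpleI)
  have Mc: "M \<subseteq> carrier R" using M by (simp add: ideal.axioms(1) additive_subgroup.a_subset)
  show "padd R M a \<subseteq> carrier R" unfolding padd_def using Mc a by auto
  show "\<zero> \<in> padd R M a" unfolding padd_def
    using a additive_subgroup.zero_closed[OF ideal.axioms(1)[OF M]]
    by (auto intro!: exI[of _ \<zero>])
  show "x \<oplus> y \<in> padd R M a" if hx: "x \<in> padd R M a" and hy: "y \<in> padd R M a" for x y
  proof -
    obtain m r where mr: "x = m \<oplus> r \<otimes> a" "m \<in> M" "r \<in> carrier R" using hx unfolding padd_def by blast
    obtain m' r' where mr': "y = m' \<oplus> r' \<otimes> a" "m' \<in> M" "r' \<in> carrier R" using hy unfolding padd_def by blast
    have c: "m \<in> carrier R" "m' \<in> carrier R" using mr mr' Mc by auto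
    have "x \<oplus> y = (m \<oplus> m') \<oplus> (r \<oplus> r') \<otimes> a" using mr mr' c a by algebra
    moreover have "m \<oplus> m' \<in> M" using mr mr' M by (simp add: additive_subgroup.a_closed ideal.axioms(1))
    ultimately show ?thesis unfolding padd_def using mr mr' by auto
  qed
  show "x \<otimes> y \<in> padd R M a" if hy: "y \<in> padd R M a" and hx: "x \<in> carrier R" for x y
  proof -
    obtain m r where mr: "y = m \<oplus> r \<otimes> a" "m \<in> M" "r \<in> carrier R" using hy unfolding padd_def by blast
    have c: "m \<in> carrier R" using mr Mc by auto
    have "x \<otimes> y = (x \<otimes> m) \<oplus> (x \<otimes> r) \<otimes> a" using mr c a hx by algebra
    moreover have "x \<otimes> m \<in> M" using mr(2) hx M by (simp add: ideal.I_l_closed)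
    ultimately show ?thesis unfolding padd_def using mr hx by auto
  qed
qed

lemma padd_incl:
  assumes M: "ideal M R" and a: "a \<in> carrier R"
  shows "M \<subseteq> padd R M a" "a \<in> padd R M a"
proof -
  have Mc: "M \<subseteq> carrier R" using M by (simp add: ideal.axioms(1) additive_subgroup.a_subset)
  show "M \<subseteq> padd R M a"
  proof
    fix m assume m: "m \<in> M"
    have "m = m \<oplus> \<zero> \<otimes> a" using m Mc a by auto
    thus "m \<in> padd R M a" unfolding padd_def using m by blast
  qed
  have "a = \<zero> \<oplus> \<one> \<otimes> a" using a by simp
  thus "a \<in> padd R M a" unfolding padd_def
    using additive_subgroup.zero_closed[OF ideal.axioms(1)[OF M]] by blast
qed

lemma padd_least:
  assumes J: "ideal J R" and "M \<subseteq> J" "a \<in> J"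
  shows "padd R M a \<subseteq> J"
proof
  fix x assume "x \<in> padd R M a"
  then obtain m r where mr: "x = m \<oplus> r \<otimes> a" "m \<in> M" "r \<in> carrier R" unfolding padd_def by blast
  have "r \<otimes> a \<in> J" using ideal.I_l_closed[OF J assms(3) mr(3)] .
  thus "x \<in> J" using mr assms(2) J by (simp add: additive_subgroup.a_closed ideal.axioms(1) subsetD)
qed

lemma max_avoid_prime:
  assumes M: "ideal M R" and S: "S \<subseteq> carrier R" "\<one> \<in> S" "\<And>a b. a \<in> S \<Longrightarrow> b \<in> S \<Longrightarrow> a \<otimes> b \<in> S"
    and disj: "M \<inter> S = {}"
    and max: "\<And>J. ideal J R \<Longrightarrow> M \<subseteq> J \<Longrightarrow> J \<inter> S = {} \<Longrightarrow> J = M"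
  shows "primeideal M R"
proof (rule primeidealI[OF M is_cring])
  show "carrier R \<noteq> M" using S(2) disj by blast
  have Mc: "M \<subseteq> carrier R" using M by (simp add: ideal.axioms(1) additive_subgroup.a_subset)
  have meet: "\<exists>m r. m \<in> M \<and> r \<in> carrier R \<and> m \<oplus> r \<otimes> a \<in> S" if a: "a \<in> carrier R" "a \<notin> M" for a
  proof (rule ccontr)
    assume "\<not> ?thesis"
    hence "padd R M a \<inter> S = {}" unfolding padd_def by blast
    hence "padd R M a = M" using max[OF padd_ideal[OF M a(1)] padd_incl(1)[OF M a(1)]] by blast
    thus False using padd_incl(2)[OF M a(1)] a(2) by simp
  qed
  fix a b assume ab: "a \<in> carrier R" "b \<in> carrier R" "a \<otimes> b \<in> M"
  show "a \<in> M \<or> b \<in> M"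
  proof (rule ccontr)
    assume "\<not> (a \<in> M \<or> b \<in> M)"
    then obtain m r m' r' where mr: "m \<in> M" "r \<in> carrier R" "m \<oplus> r \<otimes> a \<in> S"
      and mr': "m' \<in> M" "r' \<in> carrier R" "m' \<oplus> r' \<otimes> b \<in> S"
      using meet ab by meson
    have c: "m \<in> carrier R" "m' \<in> carrier R" using mr mr' Mc by auto
    have eq: "(m \<oplus> r \<otimes> a) \<otimes> (m' \<oplus> r' \<otimes> b) = m \<otimes> (m' \<oplus> r' \<otimes> b) \<oplus> (r \<otimes> a) \<otimes> m' \<oplus> (r \<otimes> r') \<otimes> (a \<otimes> b)"
      using c ab mr mr' by algebra
    have "m \<otimes> (m' \<oplus> r' \<otimes> b) \<in> M" using ideal.I_r_closed[OF M mr(1)] c ab mr' by simp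
    moreover have "(r \<otimes> a) \<otimes> m' \<in> M" using ideal.I_l_closed[OF M mr'(1)] ab mr by simp
    moreover have "(r \<otimes> r') \<otimes> (a \<otimes> b) \<in> M" using ideal.I_l_closed[OF M ab(3)] mr mr' by simp
    ultimately have "(m \<oplus> r \<otimes> a) \<otimes> (m' \<oplus> r' \<otimes> b) \<in> M" unfolding eq using M
      by (simp add: additive_subgroup.a_closed ideal.axioms(1))
    moreover have "(m \<oplus> r \<otimes> a) \<otimes> (m' \<oplus> r' \<otimes> b) \<in> S" using S(3) mr(3) mr'(3) .
    ultimately show False using disj by blast
  qed
qed

end

context ncr
begin

lemma minimal_prime_rad:
  assumes P: "primeideal P R" and J: "ideal J R" "J \<subseteq> P"
   and min: "\<And>P'. primeideal P' R \<Longrightarrow> J \<subseteq> P' \<Longrightarrow> P' \<subseteq> P \<Longrightarrow> P' = P"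
   and y: "y \<in> P"
  shows "\<exists>s n. s \<in> carrier R \<and> s \<notin> P \<and> s \<otimes> y [^] (n::nat) \<in> J"
proof (rule ccontr)
  assume neg: "\<not> ?thesis"
  have Pc: "P \<subseteq> carrier R" using P by (simp add: ideal.axioms(1) additive_subgroup.a_subset primeideal.axioms(1))
  have yc: "y \<in> carrier R" using y Pc by auto
  define S where "S = {s \<otimes> y [^] (n::nat) | s n. s \<in> carrier R \<and> s \<notin> P}"
  have Sc: "S \<subseteq> carrier R" unfolding S_def using yc by auto
  have S1: "\<one> \<in> S" unfolding S_def using prime_one_notin[OF P]
    by (auto intro!: exI[of _ \<one>] exI[of _ "0::nat"])
  have Smul: "a \<otimes> b \<in> S" if ha: "a \<in> S" and hb: "b \<in> S" for a b
  proof -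
    obtain s n where sn: "a = s \<otimes> y [^] (n::nat)" "s \<in> carrier R" "s \<notin> P" using ha unfolding S_def by blast
    obtain t k where tk: "b = t \<otimes> y [^] (k::nat)" "t \<in> carrier R" "t \<notin> P" using hb unfolding S_def by blast
    have "a \<otimes> b = (s \<otimes> t) \<otimes> y [^] (n + k)" using sn tk yc
      by (simp add: nat_pow_mult m_ac add.commute)
    moreover have "s \<otimes> t \<notin> P" using prime_mult_notin[OF P sn(2) tk(2) sn(3) tk(3)] .
    ultimately show ?thesis unfolding S_def using sn tk by blast
  qed
  have JS: "J \<inter> S = {}" using neg unfolding S_def by blast
  define F where "F = {I. ideal I R \<and> J \<subseteq> I \<and> I \<inter> S = {}}"
  have "F \<noteq> {}" using J JS unfolding F_def by blast
  moreover have Fi: "\<And>I. I \<in> F \<Longrightarrow> ideal I R" unfolding F_def by blast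
  ultimately obtain M where M: "M \<in> F" and Mmax: "\<forall>X\<in>F. M \<subseteq> X \<longrightarrow> X = M"
    using max_principle by meson
  have Mi: "ideal M R" "J \<subseteq> M" "M \<inter> S = {}" using M unfolding F_def by auto
  have Mp: "primeideal M R"
  proof (rule max_avoid_prime[OF Mi(1) Sc S1 Smul Mi(3)])
    fix K assume K: "ideal K R" "M \<subseteq> K" "K \<inter> S = {}"
    hence "K \<in> F" unfolding F_def using Mi(2) by blast
    thus "K = M" using Mmax K(2) by blast
  qed
  have MP: "M \<subseteq> P"
  proof
    fix x assume x: "x \<in> M"
    have xc: "x \<in> carrier R" using x Mi(1) by (simp add: ideal.Icarr)
    show "x \<in> P"
    proof (rule ccontr)
      assume "x \<notin> P"
      hence "x \<otimes> y [^] (0::nat) \<in> S" unfolding S_def using xc by blast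
      thus False using x xc Mi(3) by auto
    qed
  qed
  have "y \<notin> M"
  proof
    assume "y \<in> M"
    have "\<one> \<otimes> y [^] (1::nat) \<in> S" unfolding S_def using prime_one_notin[OF P] by blast
    thus False using \<open>y \<in> M\<close> yc Mi(3) by auto
  qed
  thus False using min[OF Mp Mi(2) MP] y by simp
qed

lemma exists_maximal:
  assumes I: "ideal I R" and "I \<noteq> carrier R"
  shows "\<exists>M. maximalideal M R \<and> I \<subseteq> M"
proof -
  define F where "F = {K. ideal K R \<and> I \<subseteq> K \<and> K \<noteq> carrier R}"
  have "F \<noteq> {}" using assms unfolding F_def by blast
  moreover have Fi: "\<And>I. I \<in> F \<Longrightarrow> ideal I R" unfolding F_def by blast
  ultimately obtain M where M: "M \<in> F" and Mmax: "\<forall>X\<in>F. M \<subseteq> X \<longrightarrow> X = M"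
    using max_principle by meson
  have "maximalideal M R"
  proof (rule maximalidealI)
    show "ideal M R" using M unfolding F_def by blast
    show "carrier R \<noteq> M" using M unfolding F_def by blast
    fix K assume K: "ideal K R" "M \<subseteq> K" "K \<subseteq> carrier R"
    show "K = M \<or> K = carrier R"
    proof (cases "K = carrier R")
      case False hence "K \<in> F" using K M unfolding F_def by blast
      thus ?thesis using Mmax K(2) by blast
    qed simp
  qed
  thus ?thesis using M unfolding F_def by blast
qed

end

primrec ipow :: "('a, 'b) ring_scheme \<Rightarrow> 'a set \<Rightarrow> nat \<Rightarrow> 'a set" where
  "ipow R I 0 = carrier R"
| "ipow R I (Suc n) = ideal_prod R I (ipow R I n)"

context cring
begin

lemma idl_carr: "ideal I R \<Longrightarrow> I \<subseteq> carrier R"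
  by (simp add: ideal.axioms(1) additive_subgroup.a_subset)

lemma idl_zero: "ideal I R \<Longrightarrow> \<zero> \<in> I"
  by (simp add: ideal.axioms(1) additive_subgroup.zero_closed)

lemma idl_add: "ideal I R \<Longrightarrow> a \<in> I \<Longrightarrow> b \<in> I \<Longrightarrow> a \<oplus> b \<in> I"
  by (simp add: ideal.axioms(1) additive_subgroup.a_closed)

lemma idl_neg: "ideal I R \<Longrightarrow> a \<in> I \<Longrightarrow> \<ominus> a \<in> I"
  by (simp add: ideal.axioms(1) additive_subgroup.a_inv_closed)

lemma idl_sub: "ideal I R \<Longrightarrow> a \<in> I \<Longrightarrow> b \<in> I \<Longrightarrow> a \<ominus> b \<in> I"
  by (simp add: a_minus_def idl_add idl_neg)

lemma idl_mult: "ideal I R \<Longrightarrow> a \<in> I \<Longrightarrow> x \<in> carrier R \<Longrightarrow> x \<otimes> a \<in> I"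
  by (simp add: ideal.I_l_closed)

lemma idl_mult2: "ideal I R \<Longrightarrow> a \<in> I \<Longrightarrow> x \<in> carrier R \<Longrightarrow> a \<otimes> x \<in> I"
  by (simp add: ideal.I_r_closed)

lemma sum_mem: "x \<in> I <+> J \<longleftrightarrow> (\<exists>i\<in>I. \<exists>j\<in>J. x = i \<oplus> j)"
  unfolding set_add_def' by blast

lemma sum_memI: "i \<in> I \<Longrightarrow> j \<in> J \<Longrightarrow> i \<oplus> j \<in> I <+> J"
  unfolding sum_mem by blast

lemma sum_le: "ideal K R \<Longrightarrow> I \<subseteq> K \<Longrightarrow> J \<subseteq> K \<Longrightarrow> I <+> J \<subseteq> K"
  unfolding set_add_def' by (auto intro: idl_add)

lemma sum_incl1: "ideal I R \<Longrightarrow> ideal J R \<Longrightarrow> I \<subseteq> I <+> J"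
proof
  fix x assume h: "ideal I R" "ideal J R" "x \<in> I"
  hence "x = x \<oplus> \<zero>" "\<zero> \<in> J" using idl_carr[OF h(1)] idl_zero[OF h(2)] by auto
  thus "x \<in> I <+> J" using \<open>x \<in> I\<close> sum_memI by metis
qed

lemma sum_incl2: "ideal I R \<Longrightarrow> ideal J R \<Longrightarrow> J \<subseteq> I <+> J"
proof
  fix x assume h: "ideal I R" "ideal J R" "x \<in> J"
  hence "x = \<zero> \<oplus> x" "\<zero> \<in> I" using idl_carr[OF h(2)] idl_zero[OF h(1)] by auto
  thus "x \<in> I <+> J" using \<open>x \<in> J\<close> sum_memI by metis
qed

lemma sum_ideal: "ideal I R \<Longrightarrow> ideal J R \<Longrightarrow> ideal (I <+> J) R"
  by (rule add_ideals)

lemma sum_mono: "I \<subseteq> I' \<Longrightarrow> J \<subseteq> J' \<Longrightarrow> I <+> J \<subseteq> I' <+> J'"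
  unfolding set_add_def' by blast

lemma prod_memI: "i \<in> I \<Longrightarrow> j \<in> J \<Longrightarrow> i \<otimes> j \<in> I \<cdot> J"
  by (rule ideal_prod.prod)

lemma prod_sub:
  assumes K: "ideal K R" and h: "\<And>i j. i \<in> I \<Longrightarrow> j \<in> J \<Longrightarrow> i \<otimes> j \<in> K"
  shows "I \<cdot> J \<subseteq> K"
proof
  fix x assume "x \<in> I \<cdot> J"
  thus "x \<in> K" by (induct x rule: ideal_prod.induct) (auto intro: h idl_add[OF K])
qed

lemma prod_ideal: "ideal I R \<Longrightarrow> ideal J R \<Longrightarrow> ideal (I \<cdot> J) R"
  by (rule ideal_prod_is_ideal)

lemma prod_mono:
  assumes "ideal I' R" "ideal J' R" "I \<subseteq> I'" "J \<subseteq> J'"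
  shows "I \<cdot> J \<subseteq> I' \<cdot> J'"
  by (rule prod_sub[OF prod_ideal[OF assms(1,2)]]) (use assms(3,4) prod_memI in blast)

lemma prod_right: "ideal I R \<Longrightarrow> ideal J R \<Longrightarrow> I \<cdot> J \<subseteq> J"
  using ideal_prod_inter by blast

lemma prod_left: "ideal I R \<Longrightarrow> ideal J R \<Longrightarrow> I \<cdot> J \<subseteq> I"
  using ideal_prod_inter by blast

lemma ipow_ideal: "ideal I R \<Longrightarrow> ideal (ipow R I n) R"
  by (induct n) (simp_all add: oneideal prod_ideal)

lemma ipow_Suc_sub: "ideal I R \<Longrightarrow> ipow R I (Suc n) \<subseteq> ipow R I n"
  using prod_right[OF _ ipow_ideal] by simp

lemma ipow_anti: "ideal I R \<Longrightarrow> m \<le> n \<Longrightarrow> ipow R I n \<subseteq> ipow R I m"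
proof (induct n)
  case 0 thus ?case by simp
next
  case (Suc n) thus ?case
    using ipow_Suc_sub[OF Suc(2), of n] by (cases "m = Suc n") auto
qed

lemma ipow_mono:
  assumes I': "ideal I' R" and sub: "I \<subseteq> I'"
  shows "ipow R I n \<subseteq> ipow R I' n"
proof (induct n)
  case 0 thus ?case by simp
next
  case (Suc n) thus ?case using prod_mono[OF I' ipow_ideal[OF I'] sub Suc] by simp
qed

lemma ipow_prime:
  assumes Q: "primeideal Q R" and I: "ideal I R" and h: "ipow R I n \<subseteq> Q"
  shows "I \<subseteq> Q"
  using h
proof (induct n)
  case 0 thus ?case using primeideal.I_notcarr[OF Q] idl_carr[OF primeideal.axioms(1)[OF Q]] by auto
next
  case (Suc n)
  hence "I \<subseteq> Q \<or> ipow R I n \<subseteq> Q"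
    using primeideal_divides_ideal_prod[OF Q I ipow_ideal[OF I]] by simp
  thus ?case using Suc(1) by blast
qed

lemma ipow_elem: "ideal I R \<Longrightarrow> a \<in> I \<Longrightarrow> a [^] (n::nat) \<in> ipow R I n"
proof (induct n)
  case 0 thus ?case by simp
next
  case (Suc n)
  have ac: "a \<in> carrier R" using Suc idl_carr by auto
  have "a [^] Suc n = a \<otimes> a [^] n" using ac by (simp add: m_comm)
  thus ?case using prod_memI[OF Suc(3) Suc(1)[OF Suc(2,3)]] by simp
qed

lemma pidl_mem: "x \<in> carrier R \<Longrightarrow> x \<otimes> g \<in> PIdl g"
  unfolding cgenideal_def by blast

lemma pidl_memE: "y \<in> PIdl g \<Longrightarrow> (\<And>x. x \<in> carrier R \<Longrightarrow> y = x \<otimes> g \<Longrightarrow> thesis) \<Longrightarrow> thesis"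
  unfolding cgenideal_def by blast

lemma ipow_pidl:
  assumes g: "g \<in> carrier R"
  shows "ipow R (PIdl g) n \<subseteq> PIdl (g [^] (n::nat))"
proof (induct n)
  case 0 show ?case
  proof
    fix x assume "x \<in> ipow R (PIdl g) 0"
    hence "x \<in> carrier R" by simp
    thus "x \<in> PIdl (g [^] (0::nat))" using pidl_mem[of x "\<one>"] by simp
  qed
next
  case (Suc n)
  show ?case
  proof -
    have "(PIdl g) \<cdot> ipow R (PIdl g) n \<subseteq> PIdl (g [^] Suc n)"
    proof (rule prod_sub[OF cgenideal_ideal])
      show "g [^] Suc n \<in> carrier R" using g by simp
      fix i j assume i: "i \<in> PIdl g" and j: "j \<in> ipow R (PIdl g) n"
      obtain x where x: "x \<in> carrier R" "i = x \<otimes> g" using i by (rule pidl_memE)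
      obtain y where y: "y \<in> carrier R" "j = y \<otimes> g [^] n" using Suc j by (meson pidl_memE subsetD)
      have "i \<otimes> j = (x \<otimes> y) \<otimes> g [^] Suc n" using x y g by (simp add: nat_pow_Suc2 m_ac)
      thus "i \<otimes> j \<in> PIdl (g [^] Suc n)" using pidl_mem x y by simp
    qed
    thus ?thesis by simp
  qed
qed

lemma ipow_sum:
  assumes A: "ideal A R" and B: "ideal B R"
  shows "a + b = c \<Longrightarrow> ipow R (A <+> B) c \<subseteq> ipow R A a <+> ipow R B b"
proof (induct c arbitrary: a b)
  case 0
  hence "a = 0" "b = 0" by auto
  thus ?case using sum_incl1[OF oneideal oneideal] by simp
next
  case (Suc c)
  have AB: "ideal (A <+> B) R" using sum_ideal[OF A B] .
  have T: "ideal (ipow R A a <+> ipow R B b) R" using sum_ideal[OF ipow_ideal[OF A] ipow_ideal[OF B]] .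
  show ?case
  proof (cases "a = 0 \<or> b = 0")
    case True
    thus ?thesis
    proof
      assume "a = 0"
      hence "ipow R A a <+> ipow R B b \<supseteq> carrier R" using sum_incl1[OF oneideal ipow_ideal[OF B]] by simp
      thus ?thesis using idl_carr[OF ipow_ideal[OF AB]] by blast
    next
      assume "b = 0"
      hence "ipow R A a <+> ipow R B b \<supseteq> carrier R" using sum_incl2[OF ipow_ideal[OF A] oneideal] by simp
      thus ?thesis using idl_carr[OF ipow_ideal[OF AB]] by blast
    qed
  next
    case False
    then obtain a' b' where ab: "a = Suc a'" "b = Suc b'" by (meson not0_implies_Suc)
    have e1: "a' + b = c" and e2: "a + b' = c" using Suc.prems ab by simp_all
    have IH1: "ipow R (A <+> B) c \<subseteq> ipow R A a' <+> ipow R B b" using Suc.hyps[OF e1] .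
    have IH2: "ipow R (A <+> B) c \<subseteq> ipow R A a <+> ipow R B b'" using Suc.hyps[OF e2] .
    have "(A <+> B) \<cdot> ipow R (A <+> B) c \<subseteq> ipow R A a <+> ipow R B b"
    proof (rule prod_sub[OF T])
      fix u v assume u: "u \<in> A <+> B" and v: "v \<in> ipow R (A <+> B) c"
      obtain \<alpha> \<beta> where ab1: "\<alpha> \<in> A" "\<beta> \<in> B" "u = \<alpha> \<oplus> \<beta>" using u sum_mem by metis
      obtain v1 v2 where v12: "v1 \<in> ipow R A a'" "v2 \<in> ipow R B b" "v = v1 \<oplus> v2"
        using IH1 v sum_mem by (metis subsetD)
      obtain w1 w2 where w12: "w1 \<in> ipow R A a" "w2 \<in> ipow R B b'" "v = w1 \<oplus> w2"
        using IH2 v sum_mem by (metis subsetD)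
      have c: "\<alpha> \<in> carrier R" "\<beta> \<in> carrier R" "v1 \<in> carrier R" "v2 \<in> carrier R" "w1 \<in> carrier R" "w2 \<in> carrier R"
        using ab1 v12 w12 idl_carr A B ipow_ideal by (meson subsetD)+
      have eq: "u \<otimes> v = ((\<alpha> \<otimes> v1) \<oplus> (\<beta> \<otimes> w1)) \<oplus> ((\<alpha> \<otimes> v2) \<oplus> (\<beta> \<otimes> w2))"
      proof -
        have "u \<otimes> v = \<alpha> \<otimes> v \<oplus> \<beta> \<otimes> v" using ab1(3) c v12 by (simp add: l_distr)
        also have "\<dots> = \<alpha> \<otimes> (v1 \<oplus> v2) \<oplus> \<beta> \<otimes> (w1 \<oplus> w2)" using v12(3) w12(3) by simp
        also have "\<dots> = ((\<alpha> \<otimes> v1) \<oplus> (\<beta> \<otimes> w1)) \<oplus> ((\<alpha> \<otimes> v2) \<oplus> (\<beta> \<otimes> w2))" using c by algebra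
        finally show ?thesis .
      qed
      have "\<alpha> \<otimes> v1 \<in> ipow R A a" using prod_memI[OF ab1(1) v12(1)] ab by simp
      moreover have "\<beta> \<otimes> w1 \<in> ipow R A a" using idl_mult[OF ipow_ideal[OF A] w12(1) c(2)] .
      moreover have "\<alpha> \<otimes> v2 \<in> ipow R B b" using idl_mult[OF ipow_ideal[OF B] v12(2) c(1)] .
      moreover have "\<beta> \<otimes> w2 \<in> ipow R B b" using prod_memI[OF ab1(2) w12(2)] ab by simp
      ultimately have "((\<alpha> \<otimes> v1) \<oplus> (\<beta> \<otimes> w1)) \<oplus> ((\<alpha> \<otimes> v2) \<oplus> (\<beta> \<otimes> w2)) \<in> ipow R A a <+> ipow R B b"
        using idl_add ipow_ideal A B sum_memI by metis
      thus "u \<otimes> v \<in> ipow R A a <+> ipow R B b" using eq by simp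
    qed
    thus ?thesis by simp
  qed
qed

lemma genideal_empty: "Idl {} = {\<zero>}"
proof
  show "Idl {} \<subseteq> {\<zero>}" by (rule genideal_minimal[OF zeroideal]) simp
  show "{\<zero>} \<subseteq> Idl {}" using idl_zero[OF genideal_ideal[of "{}"]] by simp
qed

lemma genideal_insert_sub:
  assumes "g \<in> carrier R" "G \<subseteq> carrier R"
  shows "Idl (insert g G) \<subseteq> Idl G <+> PIdl g"
proof (rule genideal_minimal[OF sum_ideal[OF genideal_ideal[OF assms(2)] cgenideal_ideal[OF assms(1)]]])
  show "insert g G \<subseteq> Idl G <+> PIdl g"
    using sum_incl1[OF genideal_ideal[OF assms(2)] cgenideal_ideal[OF assms(1)]]
          sum_incl2[OF genideal_ideal[OF assms(2)] cgenideal_ideal[OF assms(1)]]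
          genideal_self[OF assms(2)] cgenideal_self[OF assms(1)] by blast
qed

lemma fg_rad_pow:
  assumes "finite G" "G \<subseteq> carrier R" and K: "ideal K R"
    and h: "\<And>g. g \<in> G \<Longrightarrow> \<exists>n::nat. g [^] n \<in> K"
  shows "\<exists>k. ipow R (Idl G) k \<subseteq> K"
  using assms(1,2) h
proof (induct G rule: finite_induct)
  case empty
  have "ipow R (Idl {}) 1 = {\<zero>} \<cdot> carrier R" by (simp add: genideal_empty)
  also have "\<dots> = {\<zero>}" using ideal_prod_one[OF zeroideal] .
  finally show ?case using idl_zero[OF K] by (intro exI[of _ 1]) simp
next
  case (insert g G)
  have g: "g \<in> carrier R" and G: "G \<subseteq> carrier R" using insert by auto
  obtain a where a: "ipow R (Idl G) a \<subseteq> K" using insert by auto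
  obtain b where b: "g [^] (b::nat) \<in> K" using insert(5) by blast
  have "ipow R (Idl (insert g G)) (a + b) \<subseteq> ipow R (Idl G <+> PIdl g) (a + b)"
    by (rule ipow_mono[OF sum_ideal[OF genideal_ideal[OF G] cgenideal_ideal[OF g]] genideal_insert_sub[OF g G]])
  also have "\<dots> \<subseteq> ipow R (Idl G) a <+> ipow R (PIdl g) b"
    by (rule ipow_sum[OF genideal_ideal[OF G] cgenideal_ideal[OF g]]) simp
  also have "\<dots> \<subseteq> K"
  proof (rule sum_le[OF K a])
    have "PIdl (g [^] b) \<subseteq> K" using b K unfolding cgenideal_def by (auto intro: idl_mult)
    thus "ipow R (PIdl g) b \<subseteq> K" using ipow_pidl[OF g, of b] by blast
  qed
  finally show ?case by blast
qed

end

context cring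
begin

lemma Idl_mono_ideal:
  assumes "G \<subseteq> carrier R" "G0 \<subseteq> G"
  shows "Idl G0 \<subseteq> Idl G"
  using subset_Idl_subset[OF assms] .

lemma nakayama_sat:
  assumes P: "primeideal P R" and J: "ideal J R" and JP: "J \<subseteq> P" and G: "finite G" "G \<subseteq> carrier R"
  shows "ideal L R \<Longrightarrow> Idl G \<subseteq> sat R P (L <+> J \<cdot> (Idl G)) \<Longrightarrow> Idl G \<subseteq> sat R P L"
  using G
proof (induct G arbitrary: L rule: finite_induct)
  case empty
  have "\<zero> \<in> sat R P L" using sat_incl[OF P idl_carr[OF empty(1)]] idl_zero[OF empty(1)] by blast
  thus ?case by (simp add: genideal_empty)
next
  case (insert g G0 L)
  have L: "ideal L R" using insert.prems(1) .
  have gc: "g \<in> carrier R" and G0c: "G0 \<subseteq> carrier R" using insert.prems(3) by auto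
  define N where "N = Idl (insert g G0)"
  define N0 where "N0 = Idl G0"
  have N: "ideal N R" unfolding N_def using genideal_ideal insert.prems(3) by blast
  have N0: "ideal N0 R" unfolding N0_def using genideal_ideal G0c by blast
  have Pg: "ideal (PIdl g) R" using cgenideal_ideal[OF gc] .
  define L2 where "L2 = L <+> PIdl g"
  have L2: "ideal L2 R" unfolding L2_def using sum_ideal[OF L Pg] .
  have LL2: "L \<subseteq> L2" unfolding L2_def using sum_incl1[OF L Pg] .
  have PL2: "PIdl g \<subseteq> L2" unfolding L2_def using sum_incl2[OF L Pg] .
  have N0N: "N0 \<subseteq> N" unfolding N0_def N_def using Idl_mono_ideal[OF insert.prems(3)] by blast
  have Nsplit: "N \<subseteq> N0 <+> PIdl g" unfolding N_def N0_def using genideal_insert_sub[OF gc G0c] .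
  have JN0: "ideal (J \<cdot> N0) R" using prod_ideal[OF J N0] .
  have T: "ideal (L2 <+> J \<cdot> N0) R" using sum_ideal[OF L2 JN0] .
  have step2: "J \<cdot> N \<subseteq> L2 <+> J \<cdot> N0"
  proof (rule prod_sub[OF T])
    fix j n assume j: "j \<in> J" and n: "n \<in> N"
    obtain n0 y where ny: "n0 \<in> N0" "y \<in> PIdl g" "n = n0 \<oplus> y" using Nsplit n sum_mem by (metis subsetD)
    obtain r where r: "r \<in> carrier R" "y = r \<otimes> g" using ny(2) by (rule pidl_memE)
    have c: "j \<in> carrier R" "n0 \<in> carrier R" using j ny idl_carr[OF J] idl_carr[OF N0] by auto
    have eq: "j \<otimes> n = (j \<otimes> r) \<otimes> g \<oplus> j \<otimes> n0" using c r gc ny(3) by algebra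
    have "(j \<otimes> r) \<otimes> g \<in> L2" using PL2 pidl_mem[of "j \<otimes> r" g] c r by auto
    moreover have "j \<otimes> n0 \<in> J \<cdot> N0" using prod_memI[OF j ny(1)] .
    ultimately show "j \<otimes> n \<in> L2 <+> J \<cdot> N0" unfolding eq by (rule sum_memI)
  qed
  have step3: "L <+> J \<cdot> N \<subseteq> L2 <+> J \<cdot> N0"
    using sum_le[OF T] LL2 sum_incl1[OF L2 JN0] step2 by blast
  have "N0 \<subseteq> sat R P (L2 <+> J \<cdot> N0)"
    using N0N insert.prems(2) sat_mono[OF step3] unfolding N_def by blast
  hence N0L2: "N0 \<subseteq> sat R P L2" using insert.hyps(3)[OF L2 _ G0c] unfolding N0_def by blast
  define Jg where "Jg = {c \<otimes> g | c. c \<in> J}"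
  have Jg: "ideal Jg R"
  proof (rule ideal_simpleI)
    show "Jg \<subseteq> carrier R" unfolding Jg_def using idl_carr[OF J] gc by auto
    have "\<zero> = \<zero> \<otimes> g" using gc by simp
    thus "\<zero> \<in> Jg" unfolding Jg_def using idl_zero[OF J] by blast
    fix a b assume a: "a \<in> Jg"
    then obtain c where c: "c \<in> J" "a = c \<otimes> g" unfolding Jg_def by blast
    have cc: "c \<in> carrier R" using c idl_carr[OF J] by auto
    { assume b: "b \<in> Jg"
      then obtain d where d: "d \<in> J" "b = d \<otimes> g" unfolding Jg_def by blast
      have dc: "d \<in> carrier R" using d idl_carr[OF J] by auto
      have "a \<oplus> b = (c \<oplus> d) \<otimes> g" using c d cc dc gc by algebra
      thus "a \<oplus> b \<in> Jg" unfolding Jg_def using idl_add[OF J c(1) d(1)] by blast }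
    { assume x: "b \<in> carrier R"
      have "b \<otimes> a = (b \<otimes> c) \<otimes> g" using c cc x gc by algebra
      thus "b \<otimes> a \<in> Jg" unfolding Jg_def using idl_mult[OF J c(1) x] by blast }
  qed
  have LJg: "ideal (L <+> Jg) R" using sum_ideal[OF L Jg] .
  have SJg: "ideal (sat R P (L <+> Jg)) R" using sat_ideal[OF P LJg] .
  have step5: "J \<cdot> N \<subseteq> sat R P (L <+> Jg)"
  proof (rule prod_sub[OF SJg])
    fix j n assume j: "j \<in> J" and n: "n \<in> N"
    obtain n0 y where ny: "n0 \<in> N0" "y \<in> PIdl g" "n = n0 \<oplus> y" using Nsplit n sum_mem by (metis subsetD)
    obtain r where r: "r \<in> carrier R" "y = r \<otimes> g" using ny(2) by (rule pidl_memE)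
    have n0s: "n0 \<in> sat R P L2" using N0L2 ny(1) by blast
    obtain t where t: "t \<in> carrier R" "t \<notin> P" "t \<otimes> n0 \<in> L2" using n0s by (rule satE)
    obtain l z where lz: "l \<in> L" "z \<in> PIdl g" "t \<otimes> n0 = l \<oplus> z" using t(3) sum_mem unfolding L2_def by metis
    obtain r' where r': "r' \<in> carrier R" "z = r' \<otimes> g" using lz(2) by (rule pidl_memE)
    have c: "j \<in> carrier R" "n0 \<in> carrier R" "l \<in> carrier R" using j ny lz idl_carr[OF J] idl_carr[OF N0] idl_carr[OF L] by auto
    have "t \<otimes> (j \<otimes> n) = j \<otimes> (t \<otimes> n0) \<oplus> (t \<otimes> j \<otimes> r) \<otimes> g" using c t r gc ny(3) by algebra
    also have "\<dots> = j \<otimes> l \<oplus> (j \<otimes> r' \<oplus> t \<otimes> j \<otimes> r) \<otimes> g" using lz(3) r' c t r gc by algebra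
    finally have eq: "t \<otimes> (j \<otimes> n) = j \<otimes> l \<oplus> (j \<otimes> r' \<oplus> t \<otimes> j \<otimes> r) \<otimes> g" .
    have "j \<otimes> l \<in> L" using idl_mult[OF L lz(1) c(1)] .
    moreover have "j \<otimes> r' \<oplus> t \<otimes> j \<otimes> r \<in> J"
      using idl_add[OF J idl_mult2[OF J j r'(1)] idl_mult2[OF J idl_mult[OF J j t(1)] r(1)]] .
    hence "(j \<otimes> r' \<oplus> t \<otimes> j \<otimes> r) \<otimes> g \<in> Jg" unfolding Jg_def by blast
    ultimately have "t \<otimes> (j \<otimes> n) \<in> L <+> Jg" unfolding eq by (rule sum_memI)
    moreover have "j \<otimes> n \<in> carrier R" using c n idl_carr[OF N] by auto
    ultimately show "j \<otimes> n \<in> sat R P (L <+> Jg)" using satI[OF t(1,2)] by blast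
  qed
  have gN: "g \<in> N" unfolding N_def using genideal_self[OF insert.prems(3)] by blast
  hence "g \<in> sat R P (L <+> J \<cdot> N)" using insert.prems(2) unfolding N_def by blast
  then obtain s where s: "s \<in> carrier R" "s \<notin> P" "s \<otimes> g \<in> L <+> J \<cdot> N" by (rule satE)
  obtain l w where lw: "l \<in> L" "w \<in> J \<cdot> N" "s \<otimes> g = l \<oplus> w" using s(3) sum_mem by metis
  have "l \<in> sat R P (L <+> Jg)" using lw(1) sum_incl1[OF L Jg] sat_incl[OF P idl_carr[OF LJg]] by blast
  moreover have "w \<in> sat R P (L <+> Jg)" using step5 lw(2) by blast
  ultimately have "s \<otimes> g \<in> sat R P (L <+> Jg)" using idl_add[OF SJg] lw(3) by simp
  hence "g \<in> sat R P (L <+> Jg)" using sat_cancel[OF P LJg s(1,2) gc] by blast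
  then obtain t where t: "t \<in> carrier R" "t \<notin> P" "t \<otimes> g \<in> L <+> Jg" by (rule satE)
  obtain l' z where lz: "l' \<in> L" "z \<in> Jg" "t \<otimes> g = l' \<oplus> z" using t(3) sum_mem by metis
  obtain c where c: "c \<in> J" "z = c \<otimes> g" using lz(2) unfolding Jg_def by blast
  have cc: "c \<in> carrier R" "l' \<in> carrier R" using c lz idl_carr[OF J] idl_carr[OF L] by auto
  have "(t \<ominus> c) \<otimes> g = l'" using lz(3) c(2) cc t(1) gc by algebra
  moreover have "t \<ominus> c \<notin> P"
  proof
    assume "t \<ominus> c \<in> P"
    hence "(t \<ominus> c) \<oplus> c \<in> P" using c(1) JP idl_add[OF primeideal.axioms(1)[OF P]] by blast
    moreover have "(t \<ominus> c) \<oplus> c = t" using t(1) cc by algebra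
    ultimately show False using t(2) by simp
  qed
  ultimately have gL: "g \<in> sat R P L" using satI[of "t \<ominus> c" P g "L"] t(1) cc gc lz(1) by simp
  have SL: "ideal (sat R P L) R" using sat_ideal[OF P L] .
  have "L2 \<subseteq> sat R P L"
  proof (unfold L2_def, rule sum_le[OF SL])
    show "L \<subseteq> sat R P L" using sat_incl[OF P idl_carr[OF L]] .
    show "PIdl g \<subseteq> sat R P L" using gL SL unfolding cgenideal_def by (auto intro: idl_mult)
  qed
  hence "sat R P L2 \<subseteq> sat R P L" using sat_mono sat_idem[OF P L] by metis
  hence "G0 \<subseteq> sat R P L" using N0L2 genideal_self[OF G0c] unfolding N0_def by blast
  hence "insert g G0 \<subseteq> sat R P L" using gL by blast
  thus ?case using genideal_minimal[OF SL] by blast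
qed

end

definition satd :: "('a, 'b) ring_scheme \<Rightarrow> 'a set \<Rightarrow> 'a set \<Rightarrow> bool" where
  "satd R P J \<longleftrightarrow> ideal J R \<and> sat R P J = J"

definition stab :: "(nat \<Rightarrow> 'a set) \<Rightarrow> bool" where
  "stab X \<longleftrightarrow> (\<exists>n0. \<forall>n\<ge>n0. X n = X n0)"

definition decr :: "(nat \<Rightarrow> 'a set) \<Rightarrow> bool" where
  "decr X \<longleftrightarrow> (\<forall>n. X (Suc n) \<subseteq> X n)"

lemma decr_le: "decr X \<Longrightarrow> m \<le> n \<Longrightarrow> X n \<subseteq> X m"
  unfolding decr_def by (rule lift_Suc_antimono_le[of X]) auto

context cring
begin

lemma satd_sat: "primeideal P R \<Longrightarrow> ideal J R \<Longrightarrow> satd R P (sat R P J)"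
  unfolding satd_def using sat_ideal sat_idem by blast

lemma satd_inter:
  assumes P: "primeideal P R" and "satd R P A" "satd R P B"
  shows "satd R P (A \<inter> B)"
proof -
  have i: "ideal (A \<inter> B) R" using assms i_intersect unfolding satd_def by blast
  have "sat R P (A \<inter> B) \<subseteq> A \<inter> B"
    using sat_mono[of "A \<inter> B" A P] sat_mono[of "A \<inter> B" B P] assms(2,3) unfolding satd_def by blast
  moreover have "A \<inter> B \<subseteq> sat R P (A \<inter> B)" using sat_incl[OF P idl_carr[OF i]] .
  ultimately show ?thesis using i unfolding satd_def by blast
qed

lemma modular_sat:
  assumes P: "primeideal P R" and A: "satd R P A" and B: "satd R P B" and N: "ideal N R"
    and BA: "B \<subseteq> A" and e1: "A \<inter> N = B \<inter> N" and e2: "sat R P (A <+> N) = sat R P (B <+> N)"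
  shows "A = B"
proof
  show "B \<subseteq> A" using BA .
  have Ai: "ideal A R" and Bi: "ideal B R" using A B unfolding satd_def by auto
  show "A \<subseteq> B"
  proof
    fix a assume a: "a \<in> A"
    have ac: "a \<in> carrier R" using a idl_carr[OF Ai] by auto
    have "a \<in> sat R P (A <+> N)"
      using sum_incl1[OF Ai N] sat_incl[OF P idl_carr[OF sum_ideal[OF Ai N]]] a by blast
    hence "a \<in> sat R P (B <+> N)" using e2 by simp
    then obtain s where s: "s \<in> carrier R" "s \<notin> P" "s \<otimes> a \<in> B <+> N" by (rule satE)
    obtain b n where bn: "b \<in> B" "n \<in> N" "s \<otimes> a = b \<oplus> n" using s(3) sum_mem by metis
    have c: "b \<in> carrier R" "n \<in> carrier R" using bn idl_carr[OF Bi] idl_carr[OF N] by auto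
    have "n = s \<otimes> a \<ominus> b" using bn(3) c s(1) ac by algebra
    moreover have "s \<otimes> a \<ominus> b \<in> A" using idl_sub[OF Ai idl_mult[OF Ai a s(1)]] bn(1) BA by blast
    ultimately have "n \<in> B" using bn(2) e1 by blast
    hence "s \<otimes> a \<in> B" using bn(1,3) idl_add[OF Bi] by simp
    hence "a \<in> sat R P B" using satI[OF s(1,2) ac] by blast
    thus "a \<in> B" using B unfolding satd_def by blast
  qed
qed

lemma stab_combine:
  assumes P: "primeideal P R" and N: "ideal N R" and X: "decr X" "\<And>n. satd R P (X n)"
    and s1: "stab (\<lambda>n. X n \<inter> N)" and s2: "stab (\<lambda>n. sat R P (X n <+> N))"
  shows "stab X"
proof -
  obtain n1 where n1: "\<forall>n\<ge>n1. X n \<inter> N = X n1 \<inter> N" using s1 unfolding stab_def by blast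
  obtain n2 where n2: "\<forall>n\<ge>n2. sat R P (X n <+> N) = sat R P (X n2 <+> N)" using s2 unfolding stab_def by blast
  define n0 where "n0 = max n1 n2"
  have "X n = X n0" if "n \<ge> n0" for n
  proof (rule sym, rule modular_sat[OF P X(2) X(2) N])
    have a: "n1 \<le> n0" "n2 \<le> n0" "n1 \<le> n" "n2 \<le> n" using that unfolding n0_def by auto
    show "X n \<subseteq> X n0" using decr_le[OF X(1) that] .
    show "X n0 \<inter> N = X n \<inter> N" by (simp add: n1[rule_format, OF a(1)] n1[rule_format, OF a(3)])
    show "sat R P (X n0 <+> N) = sat R P (X n <+> N)" by (simp add: n2[rule_format, OF a(2)] n2[rule_format, OF a(4)])
  qed
  thus ?thesis unfolding stab_def by blast
qed

lemma sum_zero_right: "ideal K R \<Longrightarrow> K <+> {\<zero>} = K"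
proof -
  assume K: "ideal K R"
  show ?thesis
  proof
    show "K <+> {\<zero>} \<subseteq> K" using sum_le[OF K] idl_zero[OF K] by blast
    show "K \<subseteq> K <+> {\<zero>}" using sum_incl1[OF K zeroideal] .
  qed
qed

lemma vstep:
  assumes P: "primeideal P R" and K: "satd R P K" and G: "finite G" "G \<subseteq> carrier R"
  shows "(\<forall>p\<in>P. \<forall>g\<in>G. p \<otimes> g \<in> K) \<Longrightarrow> decr X \<Longrightarrow>
    (\<And>n. satd R P (X n) \<and> K \<subseteq> X n \<and> X n \<subseteq> sat R P (K <+> Idl G)) \<Longrightarrow> stab X"
  using G
proof (induct G arbitrary: X rule: finite_induct)
  case empty
  have Ki: "ideal K R" using K unfolding satd_def by blast
  have "sat R P (K <+> Idl {}) = K" using K sum_zero_right[OF Ki] unfolding genideal_empty satd_def by simp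
  hence "X n = K" for n using empty(3)[of n] by blast
  thus ?case unfolding stab_def by simp
next
  case (insert g G0 X)
  have Ki: "ideal K R" using K unfolding satd_def by blast
  have gc: "g \<in> carrier R" and G0c: "G0 \<subseteq> carrier R" using insert.prems by auto
  define N' where "N' = sat R P (K <+> Idl G0)"
  define N where "N = sat R P (K <+> Idl (insert g G0))"
  have IG0: "ideal (Idl G0) R" using genideal_ideal[OF G0c] .
  have IG: "ideal (Idl (insert g G0)) R" using genideal_ideal insert.prems(4) by blast
  have N'i: "satd R P N'" unfolding N'_def using satd_sat[OF P sum_ideal[OF Ki IG0]] .
  have Ni: "satd R P N" unfolding N_def using satd_sat[OF P sum_ideal[OF Ki IG]] .
  have N'ideal: "ideal N' R" and Nideal: "ideal N R" using N'i Ni unfolding satd_def by auto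
  have KN': "K \<subseteq> N'" unfolding N'_def
    using sum_incl1[OF Ki IG0] sat_incl[OF P idl_carr[OF sum_ideal[OF Ki IG0]]] by blast
  have G0N': "Idl G0 \<subseteq> N'" unfolding N'_def
    using sum_incl2[OF Ki IG0] sat_incl[OF P idl_carr[OF sum_ideal[OF Ki IG0]]] by blast
  have N'N: "N' \<subseteq> N" unfolding N'_def N_def
    by (rule sat_mono, rule sum_mono[OF subset_refl Idl_mono_ideal[OF insert.prems(4) subset_insertI]])
  have Xi: "ideal (X n) R" for n using insert.prems(3)[of n] unfolding satd_def by blast
  have stabY: "stab (\<lambda>n. X n \<inter> N')"
  proof (rule insert.hyps(3))
    show "\<forall>p\<in>P. \<forall>g\<in>G0. p \<otimes> g \<in> K" using insert.prems(1) by blast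
    show "decr (\<lambda>n. X n \<inter> N')" using insert.prems(2) unfolding decr_def by blast
    show "G0 \<subseteq> carrier R" using G0c .
    fix n
    show "satd R P (X n \<inter> N') \<and> K \<subseteq> X n \<inter> N' \<and> X n \<inter> N' \<subseteq> sat R P (K <+> Idl G0)"
      using satd_inter[OF P _ N'i, of "X n"] insert.prems(3)[of n] KN' unfolding N'_def by blast
  qed
  define Z where "Z n = sat R P (X n <+> N')" for n
  have Zi: "ideal (Z n) R" for n unfolding Z_def using sat_ideal[OF P sum_ideal[OF Xi N'ideal]] .
  have N'Z: "N' \<subseteq> Z n" for n unfolding Z_def
    using sum_incl2[OF Xi N'ideal] sat_incl[OF P idl_carr[OF sum_ideal[OF Xi N'ideal]]] by blast
  have XZ: "X n \<subseteq> Z n" for n unfolding Z_def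
    using sum_incl1[OF Xi N'ideal] sat_incl[OF P idl_carr[OF sum_ideal[OF Xi N'ideal]]] by blast
  have ZN: "Z n \<subseteq> N" for n
  proof -
    have "X n <+> N' \<subseteq> N" using sum_le[OF Nideal] insert.prems(3)[of n] N'N unfolding N_def by blast
    hence "Z n \<subseteq> sat R P N" unfolding Z_def by (rule sat_mono)
    thus ?thesis using Ni unfolding satd_def by simp
  qed
  have Zg: "Z n = N" if "g \<in> Z n" for n
  proof
    show "Z n \<subseteq> N" using ZN .
    have "insert g G0 \<subseteq> Z n" using that G0N' N'Z genideal_self[OF G0c] by blast
    hence "Idl (insert g G0) \<subseteq> Z n" using genideal_minimal[OF Zi] by blast
    hence "K <+> Idl (insert g G0) \<subseteq> Z n" using sum_le[OF Zi] KN' N'Z by blast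
    hence "N \<subseteq> sat R P (Z n)" unfolding N_def by (rule sat_mono)
    thus "N \<subseteq> Z n" unfolding Z_def using sat_idem[OF P sum_ideal[OF Xi N'ideal]] by simp
  qed
  have Zng: "Z n = N'" if "g \<notin> Z n" for n
  proof
    show "N' \<subseteq> Z n" using N'Z .
    show "Z n \<subseteq> N'"
    proof
      fix y assume yZ: "y \<in> Z n"
      have yc: "y \<in> carrier R" using yZ idl_carr[OF Zi] by auto
      have "y \<in> N" using yZ ZN by blast
      then obtain s where s: "s \<in> carrier R" "s \<notin> P" "s \<otimes> y \<in> K <+> Idl (insert g G0)"
        unfolding N_def by (rule satE)
      obtain k i where ki: "k \<in> K" "i \<in> Idl (insert g G0)" "s \<otimes> y = k \<oplus> i" using s(3) sum_mem by metis
      obtain i0 z where iz: "i0 \<in> Idl G0" "z \<in> PIdl g" "i = i0 \<oplus> z"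
        using genideal_insert_sub[OF gc G0c] ki(2) sum_mem by (metis subsetD)
      obtain a where a: "a \<in> carrier R" "z = a \<otimes> g" using iz(2) by (rule pidl_memE)
      have c: "k \<in> carrier R" "i0 \<in> carrier R" using ki iz idl_carr[OF Ki] idl_carr[OF IG0] by auto
      show "y \<in> N'"
      proof (cases "a \<in> P")
        case True
        hence ag: "a \<otimes> g \<in> K" using insert.prems(1) by blast
        have "s \<otimes> y = (k \<oplus> a \<otimes> g) \<oplus> i0" using ki(3) iz(3) a c gc by algebra
        moreover have "k \<oplus> a \<otimes> g \<in> K" using idl_add[OF Ki ki(1) ag] .
        ultimately have "s \<otimes> y \<in> K <+> Idl G0" using sum_memI iz(1) by metis
        thus "y \<in> N'" unfolding N'_def using satI[OF s(1,2) yc] by blast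
      next
        case False
        obtain t where t: "t \<in> carrier R" "t \<notin> P" "t \<otimes> y \<in> X n <+> N'" using yZ unfolding Z_def by (rule satE)
        obtain x n' where xn: "x \<in> X n" "n' \<in> N'" "t \<otimes> y = x \<oplus> n'" using t(3) sum_mem by metis
        have c2: "x \<in> carrier R" "n' \<in> carrier R" using xn idl_carr[OF Xi] idl_carr[OF N'ideal] by auto
        have eq: "(t \<otimes> a) \<otimes> g = s \<otimes> x \<oplus> ((s \<otimes> n' \<ominus> t \<otimes> k) \<ominus> t \<otimes> i0)"
        proof -
          have "t \<otimes> (s \<otimes> y) = t \<otimes> k \<oplus> t \<otimes> i0 \<oplus> (t \<otimes> a) \<otimes> g" using ki(3) iz(3) a c gc t(1) by algebra
          moreover have "t \<otimes> (s \<otimes> y) = s \<otimes> x \<oplus> s \<otimes> n'" using xn(3) s(1) t(1) yc c2 by algebra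
          ultimately have E: "s \<otimes> x \<oplus> s \<otimes> n' = t \<otimes> k \<oplus> t \<otimes> i0 \<oplus> (t \<otimes> a) \<otimes> g" by simp
          have "s \<otimes> x \<oplus> ((s \<otimes> n' \<ominus> t \<otimes> k) \<ominus> t \<otimes> i0) = (s \<otimes> x \<oplus> s \<otimes> n') \<ominus> t \<otimes> k \<ominus> t \<otimes> i0"
            using c c2 a gc s(1) t(1) by algebra
          also have "\<dots> = (t \<otimes> k \<oplus> t \<otimes> i0 \<oplus> (t \<otimes> a) \<otimes> g) \<ominus> t \<otimes> k \<ominus> t \<otimes> i0" using E by simp
          also have "\<dots> = (t \<otimes> a) \<otimes> g" using c c2 a gc s(1) t(1) by algebra
          finally show ?thesis by simp
        qed
        have "t \<otimes> k \<in> N'" using KN' idl_mult[OF Ki ki(1) t(1)] by blast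
        moreover have "t \<otimes> i0 \<in> N'" using G0N' idl_mult[OF IG0 iz(1) t(1)] by blast
        moreover have "s \<otimes> n' \<in> N'" using idl_mult[OF N'ideal xn(2) s(1)] .
        ultimately have "(s \<otimes> n' \<ominus> t \<otimes> k) \<ominus> t \<otimes> i0 \<in> N'" using idl_sub[OF N'ideal] by blast
        moreover have "s \<otimes> x \<in> X n" using idl_mult[OF Xi xn(1) s(1)] .
        ultimately have "(t \<otimes> a) \<otimes> g \<in> X n <+> N'" unfolding eq using sum_memI by metis
        moreover have "t \<otimes> a \<notin> P" using prime_mult_notin[OF P t(1) a(1) t(2) False] .
        ultimately have "g \<in> Z n" unfolding Z_def using satI[of "t \<otimes> a" P g] t(1) a(1) gc by simp
        thus "y \<in> N'" using that by contradiction
      qed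
    qed
  qed
  have Zdecr: "Z (Suc n) \<subseteq> Z n" for n
    unfolding Z_def using insert.prems(2) unfolding decr_def by (intro sat_mono sum_mono) auto
  have stabZ: "stab Z"
  proof (cases "\<forall>n. g \<in> Z n")
    case True thus ?thesis using Zg unfolding stab_def by metis
  next
    case False
    then obtain n1 where n1: "g \<notin> Z n1" by blast
    have "g \<notin> Z n" if "n \<ge> n1" for n
      using lift_Suc_antimono_le[of Z, OF Zdecr that] n1 by blast
    hence "Z n = Z n1" if "n \<ge> n1" for n using Zng that by (metis order_refl)
    thus ?thesis unfolding stab_def by blast
  qed
  have stabZ': "stab (\<lambda>n. sat R P (X n <+> N'))" using stabZ unfolding Z_def by (simp add: fun_eq_iff)
  show ?case
    by (rule stab_combine[OF P N'ideal insert.prems(2) _ stabY stabZ']) (use insert.prems(3) in blast)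
qed

end

context ncr
begin

lemma dcc_pow:
  assumes P: "primeideal P R"
  shows "satd R P K \<Longrightarrow> ipow R P k \<subseteq> K \<Longrightarrow> decr X \<Longrightarrow> (\<And>n. satd R P (X n) \<and> K \<subseteq> X n) \<Longrightarrow> stab X"
proof (induct k arbitrary: K X)
  case 0
  have "X n = carrier R" for n using 0(2) 0(4)[of n] idl_carr[of "X n"] unfolding satd_def by auto
  thus ?case unfolding stab_def by simp
next
  case (Suc k K X)
  have Pi: "ideal P R" using P primeideal.axioms(1) by blast
  have Ki: "ideal K R" using Suc.prems(1) unfolding satd_def by blast
  have Xi: "ideal (X n) R" for n using Suc.prems(4)[of n] unfolding satd_def by blast
  have Pk: "ideal (ipow R P k) R" using ipow_ideal[OF Pi] .
  define M where "M = sat R P (K <+> ipow R P k)"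
  have KPk: "ideal (K <+> ipow R P k) R" using sum_ideal[OF Ki Pk] .
  have Ms: "satd R P M" unfolding M_def using satd_sat[OF P KPk] .
  have Mi: "ideal M R" using Ms unfolding satd_def by blast
  have PkM: "ipow R P k \<subseteq> M" unfolding M_def
    using sum_incl2[OF Ki Pk] sat_incl[OF P idl_carr[OF KPk]] by blast
  have KM: "K \<subseteq> M" unfolding M_def
    using sum_incl1[OF Ki Pk] sat_incl[OF P idl_carr[OF KPk]] by blast
  have stabZ: "stab (\<lambda>n. sat R P (X n <+> M))"
  proof (rule Suc.hyps[OF Ms PkM])
    show "decr (\<lambda>n. sat R P (X n <+> M))" using Suc.prems(3) unfolding decr_def
      by (intro allI sat_mono sum_mono) auto
    fix n
    show "satd R P (sat R P (X n <+> M)) \<and> M \<subseteq> sat R P (X n <+> M)"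
      using satd_sat[OF P sum_ideal[OF Xi Mi]] sum_incl2[OF Xi Mi]
            sat_incl[OF P idl_carr[OF sum_ideal[OF Xi Mi]]] by blast
  qed
  obtain G where G: "G \<subseteq> carrier R" "finite G" "ipow R P k = Idl G" using finetely_gen[OF Pk] by blast
  have stabY: "stab (\<lambda>n. X n \<inter> M)"
  proof (rule vstep[OF P Suc.prems(1) G(2,1)])
    show "\<forall>p\<in>P. \<forall>g\<in>G. p \<otimes> g \<in> K"
    proof (intro ballI)
      fix p g assume p: "p \<in> P" and g: "g \<in> G"
      have "g \<in> ipow R P k" using G genideal_self[OF G(1)] g by blast
      hence "p \<otimes> g \<in> ipow R P (Suc k)" using prod_memI[OF p] by simp
      thus "p \<otimes> g \<in> K" using Suc.prems(2) by blast
    qed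
    show "decr (\<lambda>n. X n \<inter> M)" using Suc.prems(3) unfolding decr_def by blast
    fix n
    show "satd R P (X n \<inter> M) \<and> K \<subseteq> X n \<inter> M \<and> X n \<inter> M \<subseteq> sat R P (K <+> Idl G)"
      using satd_inter[OF P _ Ms, of "X n"] Suc.prems(4)[of n] KM unfolding M_def G(3) by blast
  qed
  show ?case
    by (rule stab_combine[OF P Mi Suc.prems(3) _ stabY stabZ]) (use Suc.prems(4) in blast)
qed

lemma pit_core:
  assumes Q': "primeideal Q' R" and Q: "primeideal Q R" and P: "primeideal P R"
    and Q'Q: "Q' \<subset> Q" and QP: "Q \<subset> P" and x: "x \<in> P"
    and min: "\<And>P'. primeideal P' R \<Longrightarrow> padd R Q' x \<subseteq> P' \<Longrightarrow> P' \<subseteq> P \<Longrightarrow> P' = P"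
  shows False
proof -
  have Pi: "ideal P R" and Qi: "ideal Q R" and Q'i: "ideal Q' R" using P Q Q' primeideal.axioms(1) by blast+
  have xc: "x \<in> carrier R" using x idl_carr[OF Pi] by blast
  have xQ: "x \<notin> Q"
  proof
    assume "x \<in> Q"
    hence "padd R Q' x \<subseteq> Q" using padd_least[OF Qi] Q'Q by blast
    thus False using min[OF Q] QP by blast
  qed
  define J0 where "J0 = padd R Q' x"
  have J0i: "ideal J0 R" unfolding J0_def using padd_ideal[OF Q'i xc] .
  have J0P: "J0 \<subseteq> P" unfolding J0_def using padd_least[OF Pi _ x] Q'Q QP by blast
  define K where "K = sat R P J0"
  have Ks: "satd R P K" unfolding K_def using satd_sat[OF P J0i] .
  obtain GP where GP: "GP \<subseteq> carrier R" "finite GP" "P = Idl GP" using finetely_gen[OF Pi] by blast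
  have "\<exists>k. ipow R (Idl GP) k \<subseteq> K"
  proof (rule fg_rad_pow[OF GP(2,1)])
    show "ideal K R" using Ks unfolding satd_def by blast
    fix g assume "g \<in> GP"
    hence gP: "g \<in> P" using GP genideal_self[OF GP(1)] by blast
    obtain s n where sn: "s \<in> carrier R" "s \<notin> P" "s \<otimes> g [^] (n::nat) \<in> J0"
      using minimal_prime_rad[OF P J0i J0P _ gP] min unfolding J0_def by blast
    have "g [^] n \<in> K" unfolding K_def using satI[OF sn(1,2)] sn(3) gP idl_carr[OF Pi] by auto
    thus "\<exists>n::nat. g [^] n \<in> K" by blast
  qed
  then obtain k where k: "ipow R P k \<subseteq> K" using GP(3) by auto
  define Qn where "Qn n = sat R Q (Q' <+> ipow R Q n)" for n
  have QQn: "ideal (Q' <+> ipow R Q n) R" for n using sum_ideal[OF Q'i ipow_ideal[OF Qi]] .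
  have Qni: "ideal (Qn n) R" for n unfolding Qn_def using sat_ideal[OF Q QQn] .
  have Q'Qn: "Q' \<subseteq> Qn n" for n unfolding Qn_def
    using sum_incl1[OF Q'i ipow_ideal[OF Qi]] sat_incl[OF Q idl_carr[OF QQn]] by blast
  have powQn: "ipow R Q n \<subseteq> Qn n" for n unfolding Qn_def
    using sum_incl2[OF Q'i ipow_ideal[OF Qi]] sat_incl[OF Q idl_carr[OF QQn]] by blast
  have Qndecr: "Qn (Suc n) \<subseteq> Qn n" for n unfolding Qn_def
    using ipow_Suc_sub[OF Qi] by (intro sat_mono sum_mono) auto
  have Px: "ideal (PIdl x) R" using cgenideal_ideal[OF xc] .
  have xPx: "x \<in> PIdl x" using cgenideal_self[OF xc] .
  define X where "X n = sat R P (Qn n <+> PIdl x)" for n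
  have QnPx: "ideal (Qn n <+> PIdl x) R" for n using sum_ideal[OF Qni Px] .
  have Xs: "satd R P (X n)" for n unfolding X_def using satd_sat[OF P QnPx] .
  have KX: "K \<subseteq> X n" for n
  proof -
    have "J0 \<subseteq> Qn n <+> PIdl x" unfolding J0_def
      using padd_least[OF QnPx] Q'Qn sum_incl1[OF Qni Px] sum_incl2[OF Qni Px] xPx by blast
    thus ?thesis unfolding K_def X_def by (rule sat_mono)
  qed
  have Xdecr: "decr X" unfolding decr_def X_def using Qndecr by (intro allI sat_mono sum_mono) auto
  have "stab X" using dcc_pow[OF P Ks k Xdecr] Xs KX by blast
  then obtain n0 where n0: "\<forall>n\<ge>n0. X n = X n0" unfolding stab_def by blast
  define n where "n = n0"
  have XX: "X n = X (Suc n)" using n0[rule_format, of "Suc n0"] unfolding n_def by simp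
  have PxP: "PIdl x \<subseteq> P" unfolding cgenideal_def using idl_mult[OF Pi x] by blast
  have sub1: "Qn n \<subseteq> sat R P (Qn (Suc n) <+> (PIdl x) \<cdot> Qn n)"
  proof
    fix r assume r: "r \<in> Qn n"
    have rc: "r \<in> carrier R" using r idl_carr[OF Qni] by blast
    have "r \<in> X n" unfolding X_def
      using r sum_incl1[OF Qni Px] sat_incl[OF P idl_carr[OF QnPx]] by blast
    hence "r \<in> X (Suc n)" using XX by simp
    then obtain s where s: "s \<in> carrier R" "s \<notin> P" "s \<otimes> r \<in> Qn (Suc n) <+> PIdl x"
      unfolding X_def by (rule satE)
    obtain q y where qy: "q \<in> Qn (Suc n)" "y \<in> PIdl x" "s \<otimes> r = q \<oplus> y" using s(3) sum_mem by metis
    obtain a where a: "a \<in> carrier R" "y = a \<otimes> x" using qy(2) by (rule pidl_memE)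
    have qc: "q \<in> carrier R" using qy(1) idl_carr[OF Qni] by blast
    have "x \<otimes> a = s \<otimes> r \<ominus> q" using qy(3) a qc s(1) rc xc by algebra
    moreover have "s \<otimes> r \<ominus> q \<in> Qn n"
      using idl_sub[OF Qni idl_mult[OF Qni r s(1)]] qy(1) Qndecr by blast
    ultimately have "x \<otimes> a \<in> Qn n" by simp
    hence aQn: "a \<in> Qn n" unfolding Qn_def using sat_cancel[OF Q QQn xc xQ a(1)] by blast
    have "y \<in> (PIdl x) \<cdot> Qn n" using prod_memI[OF xPx aQn] a xc by (simp add: m_comm)
    hence "s \<otimes> r \<in> Qn (Suc n) <+> (PIdl x) \<cdot> Qn n" using qy sum_memI by metis
    thus "r \<in> sat R P (Qn (Suc n) <+> (PIdl x) \<cdot> Qn n)" using satI[OF s(1,2) rc] by blast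
  qed
  obtain G1 where G1: "G1 \<subseteq> carrier R" "finite G1" "Qn n = Idl G1" using finetely_gen[OF Qni] by blast
  have "Qn n \<subseteq> sat R P (Qn (Suc n))"
    using nakayama_sat[OF P Px PxP G1(2,1) Qni] sub1 unfolding G1(3) by blast
  also have "\<dots> \<subseteq> sat R Q (Qn (Suc n))" using sat_anti QP by blast
  also have "\<dots> = Qn (Suc n)" unfolding Qn_def using sat_idem[OF Q QQn] .
  finally have "ipow R Q n \<subseteq> sat R Q (Q' <+> Q \<cdot> ipow R Q n)" using powQn unfolding Qn_def by force
  moreover obtain G2 where G2: "G2 \<subseteq> carrier R" "finite G2" "ipow R Q n = Idl G2"
    using finetely_gen[OF ipow_ideal[OF Qi]] by blast
  ultimately have "ipow R Q n \<subseteq> sat R Q Q'"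
    using nakayama_sat[OF Q Qi subset_refl G2(2,1) Q'i] by simp
  also have "\<dots> = Q'" using sat_prime[OF Q Q'] Q'Q by blast
  finally have "Q \<subseteq> Q'" using ipow_prime[OF Q' Qi] by blast
  thus False using Q'Q by blast
qed

end

lemma chain_le:
  assumes "\<forall>i<r. C i \<subset> C (Suc i)" "i \<le> j" "j \<le> r"
  shows "C i \<subseteq> C j"
  using assms(2,3)
proof (induct j)
  case 0 thus ?case by simp
next
  case (Suc j)
  show ?case
  proof (cases "i = Suc j")
    case False
    hence "C i \<subseteq> C j" using Suc by simp
    moreover have "C j \<subset> C (Suc j)" using assms(1) Suc(3) by simp
    ultimately show ?thesis by blast
  qed simp
qed

lemma chain_lt:
  assumes "\<forall>i<r. C i \<subset> C (Suc i)" "i < j" "j \<le> r"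
  shows "C i \<subset> C j"
proof -
  have "C i \<subset> C (Suc i)" using assms by simp
  moreover have "C (Suc i) \<subseteq> C j" using chain_le[OF assms(1)] assms(2,3) by simp
  ultimately show ?thesis by blast
qed

context cring
begin

lemma prime_pow:
  assumes P: "primeideal P R" and y: "y \<in> carrier R" and h: "y [^] (n::nat) \<in> P"
  shows "y \<in> P"
  using h
proof (induct n)
  case 0 thus ?case using prime_one_notin[OF P] by simp
next
  case (Suc n)
  have "y [^] n \<otimes> y \<in> P" using Suc(2) by simp
  hence "y [^] n \<in> P \<or> y \<in> P" using primeideal.I_prime[OF P] y by simp
  thus ?case using Suc(1) by blast
qed

end

context ncr
begin

lemma height_thm:
  "finite X \<Longrightarrow> X \<subseteq> carrier R \<Longrightarrow> card X \<le> d \<Longrightarrow> primeideal P R \<Longrightarrow> Idl X \<subseteq> P \<Longrightarrow>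
   (\<And>P'. primeideal P' R \<Longrightarrow> Idl X \<subseteq> P' \<Longrightarrow> P' \<subseteq> P \<Longrightarrow> P' = P) \<Longrightarrow>
   (\<forall>i\<le>r. primeideal (C i) R) \<Longrightarrow> (\<forall>i<r. C i \<subset> C (Suc i)) \<Longrightarrow> C r = P \<Longrightarrow> r \<le> d"
proof (induct d arbitrary: X P C r)
  case 0
  show ?case
  proof (rule ccontr)
    assume "\<not> r \<le> 0"
    hence r: "0 < r" by simp
    have "X = {}" using 0(1,3) by simp
    have C0: "primeideal (C 0) R" using 0(7) by simp
    have "Idl X \<subseteq> C 0" unfolding \<open>X = {}\<close> genideal_empty
      using idl_zero[OF primeideal.axioms(1)[OF C0]] by simp
    moreover have "C 0 \<subseteq> P" using chain_le[OF 0(8), of 0 r] 0(9) by simp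
    ultimately have "C 0 = P" using 0(6)[OF C0] by blast
    moreover have "C 0 \<subset> C r" using chain_lt[OF 0(8) r] by simp
    ultimately show False using 0(9) by simp
  qed
next
  case (Suc d X P C r)
  note X = Suc.prems(1,2) and cardX = Suc.prems(3) and P = Suc.prems(4) and XP = Suc.prems(5)
    and min = Suc.prems(6) and Cp = Suc.prems(7) and Cc = Suc.prems(8) and Cr = Suc.prems(9)
  show ?case
  proof (cases r)
    case 0 thus ?thesis by simp
  next
    case (Suc r')
    have Pi: "ideal P R" using P primeideal.axioms(1) by blast
    have Cr'P: "C r' \<subset> P" using Cc Cr Suc by auto
    define F where "F = {Q. primeideal Q R \<and> C r' \<subseteq> Q \<and> Q \<subset> P}"
    have "F \<noteq> {}" using Cp Cr'P Suc unfolding F_def by auto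
    moreover have "\<And>I. I \<in> F \<Longrightarrow> ideal I R" unfolding F_def using primeideal.axioms(1) by blast
    ultimately obtain Q where QF: "Q \<in> F" and Qmax: "\<forall>Y\<in>F. Q \<subseteq> Y \<longrightarrow> Y = Q"
      using max_principle by meson
    have Q: "primeideal Q R" "C r' \<subseteq> Q" "Q \<subset> P" using QF unfolding F_def by auto
    have Qi: "ideal Q R" using Q(1) primeideal.axioms(1) by blast
    have "\<not> X \<subseteq> Q"
    proof
      assume "X \<subseteq> Q"
      hence "Idl X \<subseteq> Q" using genideal_minimal[OF Qi] by blast
      thus False using min[OF Q(1)] Q(3) by blast
    qed
    then obtain x where x: "x \<in> X" "x \<notin> Q" by blast
    have xP: "x \<in> P" using x(1) XP genideal_self[OF X(2)] by blast
    have xc: "x \<in> carrier R" using x X by blast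
    define X' where "X' = X - {x}"
    have cardX': "card X' \<le> d" unfolding X'_def using cardX x(1) X(1) by (simp add: card_Diff_singleton)
    have pQx: "ideal (padd R Q x) R" using padd_ideal[OF Qi xc] .
    have pQxP: "padd R Q x \<subseteq> P" using padd_least[OF Pi _ xP] Q(3) by blast
    have minQx: "P' = P" if P': "primeideal P' R" "padd R Q x \<subseteq> P'" "P' \<subseteq> P" for P'
    proof (rule ccontr)
      assume ne: "P' \<noteq> P"
      have QP': "Q \<subseteq> P'" using padd_incl(1)[OF Qi xc] P'(2) by blast
      have "P' \<in> F" unfolding F_def using P' ne Q(2) QP' by blast
      hence "P' = Q" using Qmax QP' by blast
      thus False using padd_incl(2)[OF Qi xc] P'(2) x(2) by blast
    qed
    have "\<forall>y\<in>X'. \<exists>q. q \<in> Q \<and> (\<exists>s n a. s \<in> carrier R \<and> s \<notin> P \<and> a \<in> carrier R \<and> s \<otimes> y [^] (n::nat) = q \<oplus> a \<otimes> x)"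
    proof
      fix y assume y: "y \<in> X'"
      hence yP: "y \<in> P" unfolding X'_def using XP genideal_self[OF X(2)] by blast
      obtain s n where sn: "s \<in> carrier R" "s \<notin> P" "s \<otimes> y [^] (n::nat) \<in> padd R Q x"
        using minimal_prime_rad[OF P pQx pQxP minQx yP] by blast
      then obtain q a where "s \<otimes> y [^] n = q \<oplus> a \<otimes> x" "q \<in> Q" "a \<in> carrier R" unfolding padd_def by blast
      thus "\<exists>q. q \<in> Q \<and> (\<exists>s n a. s \<in> carrier R \<and> s \<notin> P \<and> a \<in> carrier R \<and> s \<otimes> y [^] (n::nat) = q \<oplus> a \<otimes> x)"
        using sn by blast
    qed
    then obtain qf where qf: "\<forall>y\<in>X'. qf y \<in> Q \<and> (\<exists>s n a. s \<in> carrier R \<and> s \<notin> P \<and> a \<in> carrier R \<and> s \<otimes> y [^] (n::nat) = qf y \<oplus> a \<otimes> x)"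
      by metis
    define Y where "Y = qf ` X'"
    have Yfin: "finite Y" unfolding Y_def X'_def using X(1) by simp
    have YQ: "Y \<subseteq> Q" unfolding Y_def using qf by blast
    have Yc: "Y \<subseteq> carrier R" using YQ idl_carr[OF Qi] by blast
    have cardY: "card Y \<le> d" unfolding Y_def using card_image_le[of X' qf] cardX' X(1) X'_def by simp
    have IYQ: "Idl Y \<subseteq> Q" using genideal_minimal[OF Qi YQ] .
    have minY: "Q' = Q" if Q': "primeideal Q' R" "Idl Y \<subseteq> Q'" "Q' \<subseteq> Q" for Q'
    proof (rule ccontr)
      assume ne: "Q' \<noteq> Q"
      have Q'i: "ideal Q' R" using Q'(1) primeideal.axioms(1) by blast
      show False
      proof (rule pit_core[OF Q'(1) Q(1) P _ Q(3) xP])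
        show "Q' \<subset> Q" using Q'(3) ne by blast
        fix P' assume P': "primeideal P' R" "padd R Q' x \<subseteq> P'" "P' \<subseteq> P"
        have P'i: "ideal P' R" using P'(1) primeideal.axioms(1) by blast
        have xP': "x \<in> P'" using padd_incl(2)[OF Q'i xc] P'(2) by blast
        have Q'P': "Q' \<subseteq> P'" using padd_incl(1)[OF Q'i xc] P'(2) by blast
        have "X' \<subseteq> P'"
        proof
          fix y assume y: "y \<in> X'"
          obtain s n a where sna: "s \<in> carrier R" "s \<notin> P" "a \<in> carrier R" "s \<otimes> y [^] (n::nat) = qf y \<oplus> a \<otimes> x"
            using qf y by blast
          have yc: "y \<in> carrier R" using y X unfolding X'_def by blast
          have "qf y \<in> Y" unfolding Y_def using y by blast
          hence "qf y \<in> P'" using Q'(2) Q'P' genideal_self[OF Yc] by blast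
          hence "s \<otimes> y [^] n \<in> P'" using sna(4) idl_add[OF P'i _ idl_mult[OF P'i xP' sna(3)]] by simp
          moreover have "s \<notin> P'" using sna(2) P'(3) by blast
          ultimately have "y [^] n \<in> P'" using primeideal.I_prime[OF P'(1) sna(1)] yc by simp
          thus "y \<in> P'" using prime_pow[OF P'(1) yc] by blast
        qed
        hence "X \<subseteq> P'" using xP' unfolding X'_def by blast
        hence "Idl X \<subseteq> P'" using genideal_minimal[OF P'i] by blast
        thus "P' = P" using min[OF P'(1) _ P'(3)] by blast
      qed
    qed
    define C' where "C' = (\<lambda>i. if i = r' then Q else C i)"
    have "r' \<le> d"
    proof (rule Suc.hyps[OF Yfin Yc cardY Q(1) IYQ minY])
      show "\<forall>i\<le>r'. primeideal (C' i) R" unfolding C'_def using Cp Q(1) Suc by auto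
      show "\<forall>i<r'. C' i \<subset> C' (Suc i)"
      proof (intro allI impI)
        fix i assume i: "i < r'"
        show "C' i \<subset> C' (Suc i)"
        proof (cases "Suc i = r'")
          case True
          have "C i \<subset> C r'" using chain_lt[OF Cc i] Suc by simp
          thus ?thesis unfolding C'_def using True i Q(2) by auto
        next
          case False
          thus ?thesis unfolding C'_def using i Cc Suc by auto
        qed
      qed
      show "C' r' = Q" unfolding C'_def by simp
    qed blast
    thus ?thesis using Suc by simp
  qed
qed

end

definition chainp :: "('a, 'b) ring_scheme \<Rightarrow> nat \<Rightarrow> (nat \<Rightarrow> 'a set) \<Rightarrow> bool" where
  "chainp R n P \<longleftrightarrow> (\<forall>i\<le>n. primeideal (P i) R) \<and> (\<forall>i<n. P i \<subset> P (Suc i))"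

lemma krull_dim_chainp: "krull_dim R = Sup {enat n | n. \<exists>P. chainp R n P}"
  unfolding krull_dim_def chainp_def by simp

lemma krull_fin:
  assumes "\<exists>P. chainp R 0 P" and "\<And>n P. chainp R n P \<Longrightarrow> n \<le> d"
  shows "\<exists>d0. krull_dim R = enat d0 \<and> (\<exists>P. chainp R d0 P) \<and> (\<forall>n P. chainp R n P \<longrightarrow> n \<le> d0)"
proof -
  define S where "S = {n. \<exists>P. chainp R n P}"
  have "S \<subseteq> {..d}" using assms(2) unfolding S_def by auto
  hence fin: "finite S" using finite_subset by blast
  have ne: "S \<noteq> {}" using assms(1) unfolding S_def by blast
  define d0 where "d0 = Max S"
  have d0S: "d0 \<in> S" unfolding d0_def using Max_in[OF fin ne] .
  have le: "n \<le> d0" if "n \<in> S" for n unfolding d0_def using Max_ge[OF fin that] .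
  have eq: "{enat n | n. \<exists>P. chainp R n P} = enat ` S" unfolding S_def by blast
  have "Sup (enat ` S) = enat d0"
  proof (rule antisym)
    show "Sup (enat ` S) \<le> enat d0" by (rule Sup_least) (use le in auto)
    show "enat d0 \<le> Sup (enat ` S)" by (rule Sup_upper) (use d0S in auto)
  qed
  thus ?thesis using krull_dim_chainp[of R] eq d0S le unfolding S_def by auto
qed

lemma local_max:
  assumes "local_ring R"
  shows "maximalideal (max_ideal R) R" "\<And>M. maximalideal M R \<Longrightarrow> M = max_ideal R"
proof -
  have ex: "\<exists>!m. maximalideal m R" using assms unfolding local_ring_def by blast
  show "maximalideal (max_ideal R) R" unfolding max_ideal_def using theI'[OF ex] .
  fix M assume "maximalideal M R"
  thus "M = max_ideal R" unfolding max_ideal_def using ex the1_equality by metis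
qed

context ncr
begin

lemma prime_sub_max:
  assumes m: "\<And>M. maximalideal M R \<Longrightarrow> M = m" and P: "primeideal P R"
  shows "P \<subseteq> m"
proof -
  have "P \<noteq> carrier R" using primeideal.I_notcarr[OF P] by simp
  then obtain M where "maximalideal M R" "P \<subseteq> M" using exists_maximal[OF primeideal.axioms(1)[OF P]] by blast
  thus ?thesis using m by blast
qed

lemma chain_to_top:
  assumes m: "maximalideal m R" "\<And>M. maximalideal M R \<Longrightarrow> M = m" and C: "chainp R n C"
  shows "chainp R n (\<lambda>i. if i = n then m else C i)"
proof -
  have mp: "primeideal m R" using maximalideal_prime[OF m(1)] .
  have "C n \<subseteq> m" using prime_sub_max[OF m(2)] C unfolding chainp_def by blast
  hence Cn: "C n \<subseteq> m" .
  have Cp: "\<forall>i\<le>n. primeideal (C i) R" and Cc: "\<forall>i<n. C i \<subset> C (Suc i)" using C unfolding chainp_def by auto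
  show ?thesis unfolding chainp_def
  proof (intro conjI allI impI)
    fix i assume "i \<le> n" thus "primeideal (if i = n then m else C i) R" using Cp mp by simp
  next
    fix i assume i: "i < n"
    show "(if i = n then m else C i) \<subset> (if Suc i = n then m else C (Suc i))"
    proof (cases "Suc i = n")
      case True
      have "C i \<subset> C (Suc i)" using Cc i by simp
      thus ?thesis using True Cn i by auto
    next
      case False thus ?thesis using Cc i by simp
    qed
  qed
qed

lemma dim_bound:
  assumes m: "maximalideal m R" "\<And>M. maximalideal M R \<Longrightarrow> M = m"
  shows "\<exists>d. \<forall>n C. chainp R n C \<longrightarrow> n \<le> d"
proof -
  have mi: "ideal m R" using m(1) maximalideal.axioms(1) by blast
  obtain G where G: "G \<subseteq> carrier R" "finite G" "m = Idl G" using finetely_gen[OF mi] by blast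
  have mp: "primeideal m R" using maximalideal_prime[OF m(1)] .
  have "n \<le> card G" if C: "chainp R n C" for n C
  proof -
    define C' where "C' = (\<lambda>i. if i = n then m else C i)"
    have C': "chainp R n C'" unfolding C'_def using chain_to_top[OF m C] .
    show ?thesis
    proof (rule height_thm[OF G(2,1) order_refl mp])
      show "Idl G \<subseteq> m" using G by simp
      show "\<And>P'. primeideal P' R \<Longrightarrow> Idl G \<subseteq> P' \<Longrightarrow> P' \<subseteq> m \<Longrightarrow> P' = m" using G by blast
      show "\<forall>i\<le>n. primeideal (C' i) R" "\<forall>i<n. C' i \<subset> C' (Suc i)" using C' unfolding chainp_def by auto
      show "C' n = m" unfolding C'_def by simp
    qed
  qed
  thus ?thesis by blast
qed

end

context cring
begin

lemma quot_carrier: "carrier (R Quot I) = (+>) I ` carrier R"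
  unfolding FactRing_def A_RCOSETS_def' by auto

lemma quot_zero: "\<zero>\<^bsub>R Quot I\<^esub> = I"
  by (simp add: FactRing_def)

lemma quot_one: "\<one>\<^bsub>R Quot I\<^esub> = I +> \<one>"
  by (simp add: FactRing_def)

lemma quot_mult:
  assumes "ideal I R" "x \<in> carrier R" "y \<in> carrier R"
  shows "(I +> x) \<otimes>\<^bsub>R Quot I\<^esub> (I +> y) = I +> (x \<otimes> y)"
  using ideal.rcoset_mult_add[OF assms] by (simp add: FactRing_def)

lemma coset_self: "ideal I R \<Longrightarrow> x \<in> carrier R \<Longrightarrow> x \<in> I +> x"
  using abelian_subgroup.a_rcos_self ideal.axioms(1) ideal_def
  by (metis ideal.is_ideal ideal.rcos_const_imp_mem a_r_coset_def' additive_subgroup.zero_closed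
      UN_iff l_zero singletonI)

lemma coset_memE: "x \<in> I +> y \<Longrightarrow> \<exists>i\<in>I. x = i \<oplus> y"
  unfolding a_r_coset_def' by blast

lemma coset_in_ideal:
  assumes I: "ideal I R" and W: "ideal W R" and IW: "I \<subseteq> W" and x: "x \<in> carrier R"
    and w: "w \<in> W" and e: "I +> x = I +> w"
  shows "x \<in> W"
proof -
  have "x \<in> I +> w" using coset_self[OF I x] e by simp
  then obtain i where "i \<in> I" "x = i \<oplus> w" using coset_memE by blast
  thus ?thesis using IW w idl_add[OF W] by blast
qed

lemma coset_zero: "ideal I R \<Longrightarrow> i \<in> I \<Longrightarrow> I +> i = I"
  using abelian_subgroup.a_rcos_const ideal.axioms(1) by (metis ideal_def abelian_subgroup_def
      additive_subgroup.a_subgroup ideal.is_ideal abelian_subgroupI3 abelian_group_def is_abelian_group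
      ideal.axioms(1))

lemma quot_pre_ideal:
  assumes I: "ideal I R" and Z: "ideal Z (R Quot I)"
  shows "ideal {r \<in> carrier R. I +> r \<in> Z} R"
  using ring_hom_ring.ideal_vimage[OF ideal.rcos_ring_hom_ring[OF I] Z] .

lemma quot_image:
  assumes I: "ideal I R" and Z: "Z \<subseteq> carrier (R Quot I)"
  shows "(+>) I ` {r \<in> carrier R. I +> r \<in> Z} = Z"
  using Z unfolding quot_carrier by blast

lemma quot_lift:
  assumes I: "ideal I R" and X: "X \<subseteq> carrier R" and Z: "ideal Z (R Quot I)" and XZ: "(+>) I ` X \<subseteq> Z"
  shows "(+>) I ` (Idl X) \<subseteq> Z"
proof -
  have U: "ideal {r \<in> carrier R. I +> r \<in> Z} R" using quot_pre_ideal[OF I Z] .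
  have "X \<subseteq> {r \<in> carrier R. I +> r \<in> Z}" using X XZ by blast
  hence "Idl X \<subseteq> {r \<in> carrier R. I +> r \<in> Z}" using genideal_minimal[OF U] by blast
  thus ?thesis by blast
qed

lemma quot_pre_prime:
  assumes I: "ideal I R" and P: "primeideal P (R Quot I)"
  shows "primeideal {r \<in> carrier R. I +> r \<in> P} R" "I \<subseteq> {r \<in> carrier R. I +> r \<in> P}"
proof -
  show "primeideal {r \<in> carrier R. I +> r \<in> P} R"
    using ring_hom_ring.primeideal_vimage[OF ideal.rcos_ring_hom_ring[OF I] is_cring P] .
  have "\<zero>\<^bsub>R Quot I\<^esub> \<in> P"
    using P primeideal.axioms(1) ideal.axioms(1) additive_subgroup.zero_closed by blast
  hence "I \<in> P" by (simp add: quot_zero)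
  thus "I \<subseteq> {r \<in> carrier R. I +> r \<in> P}" using coset_zero[OF I] idl_carr[OF I] by auto
qed

lemma quot_pre_strict:
  assumes "P1 \<subset> P2" "P2 \<subseteq> carrier (R Quot I)"
  shows "{r \<in> carrier R. I +> r \<in> P1} \<subset> {r \<in> carrier R. I +> r \<in> P2}"
proof -
  obtain X where X: "X \<in> P2" "X \<notin> P1" using assms(1) by blast
  then obtain r where "r \<in> carrier R" "X = I +> r" using assms(2) unfolding quot_carrier by blast
  thus ?thesis using X assms(1) by blast
qed

lemma quot_max:
  assumes I: "ideal I R" and n: "maximalideal n R" and In: "I \<subseteq> n"
    and proper: "\<And>J. ideal J R \<Longrightarrow> J \<noteq> carrier R \<Longrightarrow> J \<subseteq> n"
  shows "maximalideal ((+>) I ` n) (R Quot I)"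
    "\<And>M. maximalideal M (R Quot I) \<Longrightarrow> M = (+>) I ` n"
proof -
  have ni: "ideal n R" using n maximalideal.axioms(1) by blast
  have Qr: "ring (R Quot I)" using ideal.quotient_is_ring[OF I] .
  have nbar: "ideal ((+>) I ` n) (R Quot I)" using ring_ideal_imp_quot_ideal[OF I ni] .
  have one_n: "\<one> \<notin> n" using maximalideal.I_notcarr[OF n] ideal.one_imp_carrier[OF ni] by blast
  have ncar: "carrier (R Quot I) \<noteq> (+>) I ` n"
  proof
    assume "carrier (R Quot I) = (+>) I ` n"
    hence "I +> \<one> \<in> (+>) I ` n" unfolding quot_carrier by blast
    then obtain y where "y \<in> n" "I +> \<one> = I +> y" by blast
    hence "\<one> \<in> n" using coset_in_ideal[OF I ni In one_closed] by blast
    thus False using one_n by simp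
  qed
  show max: "maximalideal ((+>) I ` n) (R Quot I)"
  proof (rule maximalidealI[OF nbar ncar])
    fix J assume J: "ideal J (R Quot I)" "(+>) I ` n \<subseteq> J" "J \<subseteq> carrier (R Quot I)"
    define U where "U = {r \<in> carrier R. I +> r \<in> J}"
    have U: "ideal U R" unfolding U_def using quot_pre_ideal[OF I J(1)] .
    have nU: "n \<subseteq> U" unfolding U_def using J(2) idl_carr[OF ni] by blast
    have JU: "J = (+>) I ` U" unfolding U_def using quot_image[OF I J(3)] by simp
    have "U = n \<or> U = carrier R" using maximalideal.I_maximal[OF n U nU] U_def by blast
    thus "J = (+>) I ` n \<or> J = carrier (R Quot I)" using JU quot_carrier by auto
  qed
  fix M assume M: "maximalideal M (R Quot I)"
  have Mi: "ideal M (R Quot I)" using M maximalideal.axioms(1) by blast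
  have Mc: "M \<subseteq> carrier (R Quot I)" using Mi ideal.axioms(1) additive_subgroup.a_subset by blast
  define U where "U = {r \<in> carrier R. I +> r \<in> M}"
  have U: "ideal U R" unfolding U_def using quot_pre_ideal[OF I Mi] .
  have "U \<noteq> carrier R"
  proof
    assume "U = carrier R"
    hence "\<one>\<^bsub>R Quot I\<^esub> \<in> M" unfolding U_def quot_one by blast
    hence "M = carrier (R Quot I)" using ideal.one_imp_carrier[OF Mi] by blast
    thus False using maximalideal.I_notcarr[OF M] by simp
  qed
  hence "U \<subseteq> n" using proper[OF U] by blast
  hence "M \<subseteq> (+>) I ` n" using quot_image[OF I Mc] unfolding U_def by blast
  hence "(+>) I ` n = M \<or> (+>) I ` n = carrier (R Quot I)"
    using maximalideal.I_maximal[OF M nbar] idl_carr nbar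
    by (meson ideal.axioms(1) additive_subgroup.a_subset)
  thus "M = (+>) I ` n" using ncar by auto
qed

end

lemma gd_lift:
  assumes gd: "going_down A B f" and p: "chainp A r p" and Q: "primeideal Q B"
    and Qc: "{a \<in> carrier A. f a \<in> Q} = p r"
  shows "\<exists>C. chainp B r C \<and> C r = Q \<and> (\<forall>i\<le>r. {a \<in> carrier A. f a \<in> C i} = p i)"
proof -
  define L where "L = rec_nat Q (\<lambda>j P. SOME P'. primeideal P' B \<and> P' \<subseteq> P \<and> {a \<in> carrier A. f a \<in> P'} = p (r - Suc j))"
  have L0: "L 0 = Q" unfolding L_def by simp
  have LS: "L (Suc j) = (SOME P'. primeideal P' B \<and> P' \<subseteq> L j \<and> {a \<in> carrier A. f a \<in> P'} = p (r - Suc j))" for j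
    unfolding L_def by simp
  have pp: "\<forall>i\<le>r. primeideal (p i) A" and pc: "\<forall>i<r. p i \<subset> p (Suc i)" using p unfolding chainp_def by auto
  have inv: "j \<le> r \<Longrightarrow> primeideal (L j) B \<and> {a \<in> carrier A. f a \<in> L j} = p (r - j) \<and> (j > 0 \<longrightarrow> L j \<subseteq> L (j - 1))" for j
  proof (induct j)
    case 0 thus ?case using L0 Q Qc by simp
  next
    case (Suc j)
    have IH: "primeideal (L j) B" "{a \<in> carrier A. f a \<in> L j} = p (r - j)" using Suc by auto
    have e: "r - j = Suc (r - Suc j)" using Suc(2) by simp
    have lt: "r - Suc j < r" using Suc(2) by simp
    have "p (r - Suc j) \<subset> p (Suc (r - Suc j))" using pc lt by blast
    hence sub: "p (r - Suc j) \<subseteq> p (r - j)" using e by simp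
    have "\<exists>P'. primeideal P' B \<and> P' \<subseteq> L j \<and> {a \<in> carrier A. f a \<in> P'} = p (r - Suc j)"
      using gd IH sub pp unfolding going_down_def by (meson diff_le_self)
    hence "primeideal (L (Suc j)) B \<and> L (Suc j) \<subseteq> L j \<and> {a \<in> carrier A. f a \<in> L (Suc j)} = p (r - Suc j)"
      unfolding LS by (rule someI_ex)
    thus ?case by simp
  qed
  define C where "C i = L (r - i)" for i
  have "chainp B r C"
    unfolding chainp_def
  proof (intro conjI allI impI)
    fix i assume "i \<le> r" thus "primeideal (C i) B" unfolding C_def using inv by simp
  next
    fix i assume i: "i < r"
    have e: "r - i = Suc (r - Suc i)" using i by simp
    have "L (r - i) \<subseteq> L (r - Suc i)" using inv[of "r - i"] e by simp
    moreover have "{a \<in> carrier A. f a \<in> L (r - i)} = p i" using inv[of "r - i"] i by simp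
    moreover have "{a \<in> carrier A. f a \<in> L (r - Suc i)} = p (Suc i)" using inv[of "r - Suc i"] i by simp
    moreover have "p i \<noteq> p (Suc i)" using pc i by blast
    ultimately show "C i \<subset> C (Suc i)" unfolding C_def by blast
  qed
  moreover have "C r = Q" unfolding C_def using L0 by simp
  moreover have "\<forall>i\<le>r. {a \<in> carrier A. f a \<in> C i} = p i" unfolding C_def using inv by simp
  ultimately show ?thesis by blast
qed

lemma chain_concat:
  assumes C: "chainp R a C" and D: "chainp R b D" and e: "C a = D 0"
  shows "chainp R (a + b) (\<lambda>i. if i \<le> a then C i else D (i - a))"
  unfolding chainp_def
proof (intro conjI allI impI)
  fix i assume "i \<le> a + b"
  thus "primeideal (if i \<le> a then C i else D (i - a)) R" using C D unfolding chainp_def by auto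
next
  fix i assume i: "i < a + b"
  show "(if i \<le> a then C i else D (i - a)) \<subset> (if Suc i \<le> a then C (Suc i) else D (Suc i - a))"
  proof (cases "Suc i \<le> a")
    case True thus ?thesis using C unfolding chainp_def by auto
  next
    case False
    show ?thesis
    proof (cases "i = a")
      case True
      have "D 0 \<subset> D 1" using D i True unfolding chainp_def by auto
      thus ?thesis using True e by simp
    next
      case False
      hence "i > a" using \<open>\<not> Suc i \<le> a\<close> by simp
      hence "Suc i - a = Suc (i - a)" "i - a < b" using i by auto
      thus ?thesis using D \<open>i > a\<close> unfolding chainp_def by auto
    qed
  qed
qed

lemma edim_witness:
  assumes "\<exists>S. finite S \<and> S \<subseteq> max_ideal R \<and> Idl\<^bsub>R\<^esub> (S \<union> ideal_prod R (max_ideal R) (max_ideal R)) = max_ideal R"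
  shows "\<exists>S. finite S \<and> card S = edim R \<and> S \<subseteq> max_ideal R \<and> Idl\<^bsub>R\<^esub> (S \<union> ideal_prod R (max_ideal R) (max_ideal R)) = max_ideal R"
  unfolding edim_def by (rule LeastI_ex) (use assms in blast)

lemma edim_le:
  assumes "finite S" "S \<subseteq> max_ideal R" "Idl\<^bsub>R\<^esub> (S \<union> ideal_prod R (max_ideal R) (max_ideal R)) = max_ideal R"
  shows "edim R \<le> card S"
  unfolding edim_def by (rule Least_le) (use assms in blast)

theorem corollary2p4:
  fixes A :: "('a, 'c) ring_scheme" and B :: "('b, 'd) ring_scheme" and f :: "'a \<Rightarrow> 'b"
  assumes "noeth_local_ring A" and "noeth_local_ring B"
    and "local_hom A B f" and "going_down A B f"
  shows "cdim B \<le> cdim A + cdim (B Quot (ext_ideal A B f (max_ideal A))) \<and>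
         (regular_local_ring (B Quot (ext_ideal A B f (max_ideal A))) \<longrightarrow> cdim B \<le> cdim A)"
proof -
  have lA: "local_ring A" and noA: "noetherian_ring A" using assms(1) unfolding noeth_local_ring_def by auto
  have lB: "local_ring B" and noB: "noetherian_ring B" using assms(2) unfolding noeth_local_ring_def by auto
  have cA: "cring A" using lA unfolding local_ring_def by blast
  have cB: "cring B" using lB unfolding local_ring_def by blast
  interpret A: ncr A by (rule ncr.intro[OF noA cA])
  interpret B: ncr B by (rule ncr.intro[OF noB cB])
  define mA where "mA = max_ideal A"
  define nB where "nB = max_ideal B"
  have mAmax: "maximalideal mA A" using local_max(1)[OF lA] unfolding mA_def .
  have mAu: "\<And>M. maximalideal M A \<Longrightarrow> M = mA" using local_max(2)[OF lA] unfolding mA_def .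
  have nBmax: "maximalideal nB B" using local_max(1)[OF lB] unfolding nB_def .
  have nBu: "\<And>M. maximalideal M B \<Longrightarrow> M = nB" using local_max(2)[OF lB] unfolding nB_def .
  have mAi: "ideal mA A" using mAmax maximalideal.axioms(1) by blast
  have nBi: "ideal nB B" using nBmax maximalideal.axioms(1) by blast
  have mAp: "primeideal mA A" using A.maximalideal_prime[OF mAmax] .
  have nBp: "primeideal nB B" using B.maximalideal_prime[OF nBmax] .
  have fh: "f \<in> ring_hom A B" and fm: "f ` mA \<subseteq> nB"
    using assms(3) unfolding local_hom_def mA_def nB_def by auto
  have fhr: "ring_hom_ring A B f" using ring_hom_ringI2[OF A.ring_axioms B.ring_axioms fh] .
  have fc: "\<And>a. a \<in> carrier A \<Longrightarrow> f a \<in> carrier B" using ring_hom_closed[OF fh] .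
  define I where "I = ext_ideal A B f mA"
  have Idef: "I = Idl\<^bsub>B\<^esub> (f ` mA)" unfolding I_def ext_ideal_def ..
  have fmc: "f ` mA \<subseteq> carrier B" using fm B.idl_carr[OF nBi] by blast
  have Ii: "ideal I B" using B.genideal_ideal[OF fmc] Idef by simp
  have In: "I \<subseteq> nB" using B.genideal_minimal[OF nBi fm] Idef by simp
  have fmI: "f ` mA \<subseteq> I" using B.genideal_self[OF fmc] Idef by simp
  have contr: "{a \<in> carrier A. f a \<in> Q} = mA" if Q: "primeideal Q B" "I \<subseteq> Q" for Q
  proof -
    have cp: "primeideal {a \<in> carrier A. f a \<in> Q} A"
      using ring_hom_ring.primeideal_vimage[OF fhr cA Q(1)] .
    have ci: "ideal {a \<in> carrier A. f a \<in> Q} A" using cp primeideal.axioms(1) by blast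
    have sub: "mA \<subseteq> {a \<in> carrier A. f a \<in> Q}" using fmI Q(2) A.idl_carr[OF mAi] by blast
    have "{a \<in> carrier A. f a \<in> Q} = mA \<or> {a \<in> carrier A. f a \<in> Q} = carrier A"
      using maximalideal.I_maximal[OF mAmax ci sub] by blast
    thus ?thesis using primeideal.I_notcarr[OF cp] by auto
  qed
  define Bb where "Bb = B Quot I"
  have cBb: "cring Bb" unfolding Bb_def using ideal.quotient_is_cring[OF Ii cB] .
  interpret Bb: cring Bb using cBb .
  define pr where "pr = a_r_coset B I"
  define nbar where "nbar = pr ` nB"
  have proper: "J \<subseteq> nB" if "ideal J B" "J \<noteq> carrier B" for J
    using B.exists_maximal[OF that] nBu by blast
  have nbmax: "maximalideal nbar Bb" using B.quot_max(1)[OF Ii nBmax In proper] unfolding nbar_def Bb_def pr_def .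
  have nbu: "\<And>M. maximalideal M Bb \<Longrightarrow> M = nbar" using B.quot_max(2)[OF Ii nBmax In proper] unfolding nbar_def Bb_def pr_def .
  have mxBb: "max_ideal Bb = nbar" unfolding max_ideal_def using nbmax nbu by (metis the_equality)
  have nbi: "ideal nbar Bb" using nbmax maximalideal.axioms(1) by blast
  have nbp: "primeideal nbar Bb" using Bb.maximalideal_prime[OF nbmax] .
  obtain dd where dd: "\<forall>n C. chainp B n C \<longrightarrow> n \<le> dd" using B.dim_bound[OF nBmax nBu] by blast
  have c0B: "chainp B 0 (\<lambda>_. nB)" unfolding chainp_def using nBp by simp
  have "\<exists>d0. krull_dim B = enat d0 \<and> (\<exists>P. chainp B d0 P) \<and> (\<forall>n P. chainp B n P \<longrightarrow> n \<le> d0)"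
    by (rule krull_fin[of B dd]) (use c0B dd in auto)
  then obtain dB where dB: "krull_dim B = enat dB" "\<forall>n C. chainp B n C \<longrightarrow> n \<le> dB" by blast
  have boundA: "n \<le> dB" if p: "chainp A n p" for n p
  proof -
    have p': "chainp A n (\<lambda>i. if i = n then mA else p i)" using A.chain_to_top[OF mAmax mAu p] .
    have "{a \<in> carrier A. f a \<in> nB} = (\<lambda>i. if i = n then mA else p i) n" using contr[OF nBp In] by simp
    then obtain C where "chainp B n C" using gd_lift[OF assms(4) p' nBp] by blast
    thus ?thesis using dB(2) by blast
  qed
  have c0A: "chainp A 0 (\<lambda>_. mA)" unfolding chainp_def using mAp by simp
  have "\<exists>d0. krull_dim A = enat d0 \<and> (\<exists>P. chainp A d0 P) \<and> (\<forall>n P. chainp A n P \<longrightarrow> n \<le> d0)"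
    by (rule krull_fin[of A dB]) (use c0A boundA in auto)
  then obtain dA where dA: "krull_dim A = enat dA" "\<exists>P. chainp A dA P" by blast
  then obtain pA where pA: "chainp A dA pA" by blast
  have pre: "chainp B n (\<lambda>i. {r \<in> carrier B. pr r \<in> P i}) \<and> I \<subseteq> {r \<in> carrier B. pr r \<in> P 0}"
    if P: "chainp Bb n P" for n P
  proof -
    have Pp: "\<forall>i\<le>n. primeideal (P i) Bb" and Pc: "\<forall>i<n. P i \<subset> P (Suc i)" using P unfolding chainp_def by auto
    have "chainp B n (\<lambda>i. {r \<in> carrier B. pr r \<in> P i})" unfolding chainp_def
    proof (intro conjI allI impI)
      fix i assume "i \<le> n"
      thus "primeideal {r \<in> carrier B. pr r \<in> P i} B"
        using B.quot_pre_prime(1)[OF Ii] Pp unfolding pr_def Bb_def by blast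
    next
      fix i assume i: "i < n"
      have "primeideal (P (Suc i)) Bb" using Pp i by simp
      hence "P (Suc i) \<subseteq> carrier Bb" using Bb.idl_carr[OF primeideal.axioms(1)] by blast
      thus "{r \<in> carrier B. pr r \<in> P i} \<subset> {r \<in> carrier B. pr r \<in> P (Suc i)}"
        using B.quot_pre_strict[OF Pc[rule_format, OF i]] unfolding pr_def Bb_def by blast
    qed
    moreover have "I \<subseteq> {r \<in> carrier B. pr r \<in> P 0}"
      using B.quot_pre_prime(2)[OF Ii] Pp unfolding pr_def Bb_def by blast
    ultimately show ?thesis by blast
  qed
  have boundBb: "n \<le> dB" if "chainp Bb n P" for n P using pre[OF that] dB(2) by blast
  have c0Bb: "chainp Bb 0 (\<lambda>_. nbar)" unfolding chainp_def using nbp by simp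
  have "\<exists>d0. krull_dim Bb = enat d0 \<and> (\<exists>P. chainp Bb d0 P) \<and> (\<forall>n P. chainp Bb n P \<longrightarrow> n \<le> d0)"
    by (rule krull_fin[of Bb dB]) (use c0Bb boundBb in auto)
  then obtain dBb where dBb: "krull_dim Bb = enat dBb" "\<exists>P. chainp Bb dBb P" by blast
  then obtain PB where PB: "chainp Bb dBb PB" by blast
  define Qs where "Qs i = {r \<in> carrier B. pr r \<in> PB i}" for i
  have Qs: "chainp B dBb Qs" "I \<subseteq> Qs 0" using pre[OF PB] unfolding Qs_def by auto
  have Qs0: "primeideal (Qs 0) B" using Qs(1) unfolding chainp_def by simp
  have pA': "chainp A dA (\<lambda>i. if i = dA then mA else pA i)" using A.chain_to_top[OF mAmax mAu pA] .
  have "{a \<in> carrier A. f a \<in> Qs 0} = (\<lambda>i. if i = dA then mA else pA i) dA" using contr[OF Qs0 Qs(2)] by simp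
  then obtain C where C: "chainp B dA C" "C dA = Qs 0" using gd_lift[OF assms(4) pA' Qs0] by blast
  have "chainp B (dA + dBb) (\<lambda>i. if i \<le> dA then C i else Qs (i - dA))"
    using chain_concat[OF C(1) Qs(1) C(2)] .
  hence dimineq: "dA + dBb \<le> dB" using dB(2) by blast
  define mm where "mm = ideal_prod A mA mA"
  define nn where "nn = ideal_prod B nB nB"
  have mmi: "ideal mm A" unfolding mm_def using A.prod_ideal[OF mAi mAi] .
  have nni: "ideal nn B" unfolding nn_def using B.prod_ideal[OF nBi nBi] .
  have mmsub: "mm \<subseteq> mA" unfolding mm_def using A.prod_left[OF mAi mAi] .
  have nnsub: "nn \<subseteq> nB" unfolding nn_def using B.prod_left[OF nBi nBi] .
  obtain GA where GA: "GA \<subseteq> carrier A" "finite GA" "mA = Idl\<^bsub>A\<^esub> GA" using A.finetely_gen[OF mAi] by blast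
  have "\<exists>S. finite S \<and> S \<subseteq> max_ideal A \<and> Idl\<^bsub>A\<^esub> (S \<union> ideal_prod A (max_ideal A) (max_ideal A)) = max_ideal A"
  proof (intro exI conjI)
    show "finite GA" using GA(2) .
    show GAm: "GA \<subseteq> max_ideal A" using A.genideal_self[OF GA(1)] GA(3) unfolding mA_def by simp
    have c: "GA \<union> mm \<subseteq> carrier A" using GA(1) A.idl_carr[OF mmi] by blast
    show "Idl\<^bsub>A\<^esub> (GA \<union> ideal_prod A (max_ideal A) (max_ideal A)) = max_ideal A"
    proof
      show "Idl\<^bsub>A\<^esub> (GA \<union> ideal_prod A (max_ideal A) (max_ideal A)) \<subseteq> max_ideal A"
        using A.genideal_minimal[OF mAi] GAm mmsub unfolding mm_def mA_def by blast
      show "max_ideal A \<subseteq> Idl\<^bsub>A\<^esub> (GA \<union> ideal_prod A (max_ideal A) (max_ideal A))"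
        using A.subset_Idl_subset[OF c] GA(3) unfolding mm_def mA_def by auto
    qed
  qed
  from edim_witness[OF this] obtain SA where SA: "finite SA" "card SA = edim A" "SA \<subseteq> mA"
    "Idl\<^bsub>A\<^esub> (SA \<union> mm) = mA" unfolding mm_def mA_def by blast
  obtain GB where GB: "GB \<subseteq> carrier B" "finite GB" "nB = Idl\<^bsub>B\<^esub> GB" using B.finetely_gen[OF nBi] by blast
  have nbc: "nbar \<subseteq> carrier Bb" using Bb.idl_carr[OF nbi] .
  have nnb: "ideal_prod Bb nbar nbar \<subseteq> nbar" using Bb.prod_left[OF nbi nbi] .
  have GBn: "GB \<subseteq> nB" using B.genideal_self[OF GB(1)] GB(3) by simp
  have Gs: "pr ` GB \<subseteq> nbar" unfolding nbar_def using GBn by (rule image_mono)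
  have c: "pr ` GB \<union> ideal_prod Bb nbar nbar \<subseteq> carrier Bb" using Gs nbc nnb by blast
  have Zi: "ideal (Idl\<^bsub>Bb\<^esub> (pr ` GB \<union> ideal_prod Bb nbar nbar)) Bb" using Bb.genideal_ideal[OF c] .
  have Z1: "Idl\<^bsub>Bb\<^esub> (pr ` GB \<union> ideal_prod Bb nbar nbar) \<subseteq> nbar"
    using Bb.genideal_minimal[OF nbi Un_least[OF Gs nnb]] .
  have Z2: "pr ` GB \<subseteq> Idl\<^bsub>Bb\<^esub> (pr ` GB \<union> ideal_prod Bb nbar nbar)"
    using subset_trans[OF Un_upper1 Bb.genideal_self[OF c]] .
  note ql = B.quot_lift[OF Ii GB(1), folded pr_def Bb_def]
  have Z3: "nbar \<subseteq> Idl\<^bsub>Bb\<^esub> (pr ` GB \<union> ideal_prod Bb nbar nbar)"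
    using ql[OF Zi Z2] GB(3) unfolding nbar_def by simp
  have "finite (pr ` GB) \<and> pr ` GB \<subseteq> nbar \<and> Idl\<^bsub>Bb\<^esub> (pr ` GB \<union> ideal_prod Bb nbar nbar) = nbar"
    using GB(2) Gs Z1 Z3 by blast
  hence "\<exists>S. finite S \<and> S \<subseteq> max_ideal Bb \<and> Idl\<^bsub>Bb\<^esub> (S \<union> ideal_prod Bb (max_ideal Bb) (max_ideal Bb)) = max_ideal Bb"
    unfolding mxBb by blast
  from edim_witness[OF this] obtain Sb where Sb: "finite Sb" "card Sb = edim Bb" "Sb \<subseteq> nbar"
    "Idl\<^bsub>Bb\<^esub> (Sb \<union> ideal_prod Bb nbar nbar) = nbar" unfolding mxBb by blast
  have "\<forall>X\<in>Sb. \<exists>r. r \<in> nB \<and> X = pr r" using Sb(3) unfolding nbar_def by blast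
  then obtain rep where rep: "\<forall>X\<in>Sb. rep X \<in> nB \<and> X = pr (rep X)" by metis
  define SB where "SB = f ` SA \<union> rep ` Sb"
  have SBfin: "finite SB" unfolding SB_def using SA(1) Sb(1) by simp
  have cardSB: "card SB \<le> edim A + edim Bb"
  proof -
    have "card SB \<le> card (f ` SA) + card (rep ` Sb)" unfolding SB_def by (rule card_Un_le)
    also have "\<dots> \<le> card SA + card Sb" using card_image_le[OF SA(1), of f] card_image_le[OF Sb(1), of rep] by linarith
    finally show ?thesis using SA(2) Sb(2) by simp
  qed
  have SBn: "SB \<subseteq> nB" unfolding SB_def using SA(3) fm rep by blast
  have SBc: "SB \<union> nn \<subseteq> carrier B" using SBn nnsub B.idl_carr[OF nBi] by blast
  define W where "W = Idl\<^bsub>B\<^esub> (SB \<union> nn)"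
  have Wi: "ideal W B" unfolding W_def using B.genideal_ideal[OF SBc] .
  have SBW: "SB \<union> nn \<subseteq> W" unfolding W_def using B.genideal_self[OF SBc] .
  have Wn: "W \<subseteq> nB" unfolding W_def using B.genideal_minimal[OF nBi] SBn nnsub by blast
  have IW: "I \<subseteq> W"
  proof -
    define V where "V = {a \<in> carrier A. f a \<in> W}"
    have Vi: "ideal V A" unfolding V_def using ring_hom_ring.ideal_vimage[OF fhr Wi] .
    have "SA \<subseteq> V"
    proof
      fix a assume a: "a \<in> SA"
      have "a \<in> carrier A" using SA(3) a A.idl_carr[OF mAi] by blast
      moreover have "f a \<in> SB" using a unfolding SB_def by blast
      ultimately show "a \<in> V" unfolding V_def using SBW by blast
    qed
    moreover have "mm \<subseteq> V" unfolding mm_def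
    proof (rule A.prod_sub[OF Vi])
      fix a b assume a: "a \<in> mA" and b: "b \<in> mA"
      have ac: "a \<in> carrier A" and bc: "b \<in> carrier A" using a b A.idl_carr[OF mAi] by auto
      have "f (a \<otimes>\<^bsub>A\<^esub> b) = f a \<otimes>\<^bsub>B\<^esub> f b" using ring_hom_mult[OF fh ac bc] .
      moreover have "f a \<otimes>\<^bsub>B\<^esub> f b \<in> nn" unfolding nn_def using B.prod_memI fm a b by blast
      ultimately have "f (a \<otimes>\<^bsub>A\<^esub> b) \<in> nn" by simp
      hence "f (a \<otimes>\<^bsub>A\<^esub> b) \<in> W" using SBW by blast
      moreover have "a \<otimes>\<^bsub>A\<^esub> b \<in> carrier A" using ac bc by simp
      ultimately show "a \<otimes>\<^bsub>A\<^esub> b \<in> V" unfolding V_def by blast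
    qed
    ultimately have "Idl\<^bsub>A\<^esub> (SA \<union> mm) \<subseteq> V" using A.genideal_minimal[OF Vi] by blast
    hence "mA \<subseteq> V" using SA(4) by simp
    hence "f ` mA \<subseteq> W" unfolding V_def by blast
    thus ?thesis using B.genideal_minimal[OF Wi] Idef by simp
  qed
  have ZWi: "ideal (pr ` W) Bb" using B.ring_ideal_imp_quot_ideal[OF Ii Wi, folded pr_def Bb_def] .
  have nbW: "nbar \<subseteq> pr ` W"
  proof -
    have "Sb \<subseteq> pr ` W"
    proof
      fix X assume X: "X \<in> Sb"
      have "rep X \<in> SB" using X unfolding SB_def by blast
      hence "rep X \<in> W" using SBW by blast
      moreover have "X = pr (rep X)" using bspec[OF rep X] by (rule conjunct2)
      ultimately show "X \<in> pr ` W" by (metis imageI)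
    qed
    moreover have "ideal_prod Bb nbar nbar \<subseteq> pr ` W"
    proof (rule Bb.prod_sub[OF ZWi])
      fix X Y assume X: "X \<in> nbar" and Y: "Y \<in> nbar"
      obtain x where x: "x \<in> nB" "X = pr x" using X unfolding nbar_def by blast
      obtain y where y: "y \<in> nB" "Y = pr y" using Y unfolding nbar_def by blast
      have xc: "x \<in> carrier B" and yc: "y \<in> carrier B" using x y B.idl_carr[OF nBi] by auto
      have "X \<otimes>\<^bsub>Bb\<^esub> Y = pr (x \<otimes>\<^bsub>B\<^esub> y)" unfolding x(2) y(2) by (rule B.quot_mult[OF Ii xc yc, folded pr_def Bb_def])
      moreover have "x \<otimes>\<^bsub>B\<^esub> y \<in> W" using B.prod_memI[OF x(1) y(1)] SBW unfolding nn_def by blast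
      ultimately show "X \<otimes>\<^bsub>Bb\<^esub> Y \<in> pr ` W" by (metis imageI)
    qed
    ultimately have "Idl\<^bsub>Bb\<^esub> (Sb \<union> ideal_prod Bb nbar nbar) \<subseteq> pr ` W" by (rule Bb.genideal_minimal[OF ZWi Un_least])
    thus ?thesis using Sb(4) by simp
  qed
  have "nB \<subseteq> W"
  proof
    fix n assume n: "n \<in> nB"
    have nc: "n \<in> carrier B" using n B.idl_carr[OF nBi] by blast
    have "pr n \<in> pr ` W" using nbW n unfolding nbar_def by blast
    then obtain w where "w \<in> W" "pr n = pr w" by blast
    thus "n \<in> W" using B.coset_in_ideal[OF Ii Wi IW nc, folded pr_def] by blast
  qed
  hence "W = nB" using Wn by blast
  hence "edim B \<le> card SB" using edim_le[of SB B] SBfin SBn unfolding W_def nn_def nB_def by blast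
  hence edimineq: "edim B \<le> edim A + edim Bb" using cardSB by simp
  have e1: "cdim B = int (edim B) - int dB" unfolding cdim_def dB(1) by simp
  have e2: "cdim A = int (edim A) - int dA" unfolding cdim_def dA(1) by simp
  have e3: "cdim Bb = int (edim Bb) - int dBb" unfolding cdim_def dBb(1) by simp
  have part1: "cdim B \<le> cdim A + cdim Bb" unfolding e1 e2 e3 using dimineq edimineq by linarith
  have part2: "regular_local_ring Bb \<longrightarrow> cdim B \<le> cdim A"
  proof
    assume "regular_local_ring Bb"
    hence "krull_dim Bb = enat (edim Bb)" unfolding regular_local_ring_def by blast
    hence "cdim Bb = 0" unfolding e3 using dBb(1) by simp
    thus "cdim B \<le> cdim A" using part1 by simp
  qed
  show ?thesis using part1 part2 unfolding Bb_def I_def mA_def by blast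
qed

end
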